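(* Let $n>(p+s)^4$ be an integer. For any $i \in \{2,3,\ldots,p-1+s\}$, the number $\rho_i:=\sum_{k=1}^n r_{i,k}$ satisfies $\Phi_{n}^{-1} d_n^{p-1+s-i} \rho_{i} \in \mathbb{Z}$.
   Context: Let $p\geqslant 5$ be a prime and $s$ a positive integer. Write $v_p$ for the $p$-adic valuation, $(\alpha)_k=\alpha(\alpha+1)\cdots(\alpha+k-1)$, and $d_n=\operatorname{LCM}\{1,2,\ldots,n\}$. Put $N_0=v_p(p-1+s)$ and $M_0=p^{2+N_0}s-1$. For an integer $n>(p+s)^4$ let \[R_n(t)=p^{pn}\, n!^s\, t^{M_0}\,\frac{\prod_{j=1}^{p-1}(t+\frac{j}{p})_n}{(t)_{n+1}^{p-1+s}}\in\mathbb{Q}(t),\] with partial fraction decomposition $R_n(t)=\sum_{i=1}^{p-1+s}\sum_{k=1}^{n} r_{i,k}(t+k)^{-i}$, $r_{i,k}\in\mathbb{Q}$. Let $\Phi_{n} = \prod_{\sqrt{pn} < q \leqslant n,\ q\text{ prime}} q^{\phi(n/q)}$, where $\phi(x)=0$ if $\{x\}\in[0,2/p)$ and $\phi(x)=j-1$ if $\{x\}\in[j/p,(j+1)/p)$ for $j=2,\ldots,p-1$, with $\{x\}=x-\lfloor x\rfloor$. *)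

theory Defs
  imports "HOL-Computational_Algebra.Computational_Algebra"
begin

definition N0 :: "nat \<Rightarrow> nat \<Rightarrow> nat" where
  "N0 p s = multiplicity p (p - 1 + s)"

definition M0 :: "nat \<Rightarrow> nat \<Rightarrow> nat" where
  "M0 p s = p ^ (2 + N0 p s) * s - 1"

definition dlcm :: "nat \<Rightarrow> nat" where
  "dlcm n = Lcm {1..n}"

definition Rfun :: "nat \<Rightarrow> nat \<Rightarrow> nat \<Rightarrow> rat \<Rightarrow> rat" where
  "Rfun p s n t =
     of_nat p ^ (p * n) * (fact n) ^ s * t ^ (M0 p s) *
     (\<Prod>j=1..p-1. pochhammer (t + of_nat j / of_nat p) n)
     / (pochhammer t (n + 1)) ^ (p - 1 + s)"

definition pf_coeff :: "nat \<Rightarrow> nat \<Rightarrow> nat \<Rightarrow> nat \<Rightarrow> nat \<Rightarrow> rat" where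
  "pf_coeff p s n = (THE r. (\<forall>i k. (i \<notin> {1..p-1+s} \<or> k \<notin> {1..n}) \<longrightarrow> r i k = 0) \<and>
      (\<forall>t::rat. (\<forall>k\<in>{0..n}. t \<noteq> - of_nat k) \<longrightarrow>
         Rfun p s n t = (\<Sum>i=1..p-1+s. \<Sum>k=1..n. r i k / (t + of_nat k) ^ i)))"

definition rho :: "nat \<Rightarrow> nat \<Rightarrow> nat \<Rightarrow> nat \<Rightarrow> rat" where
  "rho p s n i = (\<Sum>k=1..n. pf_coeff p s n i k)"

definition phi_p :: "nat \<Rightarrow> real \<Rightarrow> nat" where
  "phi_p p x = (if frac x < 2 / real p then 0 else nat \<lfloor>real p * frac x\<rfloor> - 1)"

definition Phi :: "nat \<Rightarrow> nat \<Rightarrow> nat" where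
  "Phi p n = (\<Prod>q\<in>{q. prime q \<and> sqrt (real (p * n)) < real q \<and> q \<le> n}.
                 q ^ phi_p p (real n / real q))"

end

theory Submission
  imports Defs "HOL-Computational_Algebra.Field_as_Ring"
begin

definition vq :: "nat \<Rightarrow> rat \<Rightarrow> int" where
  "vq q x = (case quotient_of x of (a, b) \<Rightarrow> int (multiplicity (int q) a) - int (multiplicity (int q) b))"

lemma vq_frac:
  assumes q: "prime q" and a: "a \<noteq> 0" and b: "b \<noteq> 0"
  shows "vq q (of_int a / of_int b) = int (multiplicity (int q) a) - int (multiplicity (int q) b)"
proof -
  obtain a' b' where qo: "quotient_of (of_int a / of_int b) = (a', b')" by fastforce
  have eq: "of_int a / of_int b = (of_int a' / of_int b' :: rat)" using quotient_of_div[OF qo] .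
  have b'pos: "b' > 0" using quotient_of_denom_pos[OF qo] .
  have "a' \<noteq> 0" using eq a b b'pos by auto
  from eq have "a * b' = a' * b" using b b'pos by (simp add: frac_eq_eq) (metis of_int_eq_iff of_int_mult)
  hence "multiplicity (int q) (a * b') = multiplicity (int q) (a' * b)" by simp
  hence "multiplicity (int q) a + multiplicity (int q) b' = multiplicity (int q) a' + multiplicity (int q) b"
    using q a b b'pos \<open>a' \<noteq> 0\<close>
    by (simp add: prime_elem_multiplicity_mult_distrib)
  thus ?thesis unfolding vq_def qo by simp
qed

lemma rat_as_frac: "\<exists>a b. a \<noteq> 0 \<and> b \<noteq> 0 \<and> x = of_int a / of_int b" if "x \<noteq> (0::rat)"
proof -
  obtain a b where "quotient_of x = (a,b)" by fastforce
  thus ?thesis using quotient_of_div quotient_of_denom_pos that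
    by (metis div_0 of_int_0 order_less_irrefl)
qed

lemma vq_int: "prime q \<Longrightarrow> z \<noteq> 0 \<Longrightarrow> vq q (of_int z) = int (multiplicity (int q) z)"
  using vq_frac[of q z 1] by simp

lemma vq_mult:
  assumes q: "prime q" and "x \<noteq> 0" "y \<noteq> 0"
  shows "vq q (x * y) = vq q x + vq q y"
proof -
  obtain a b where ab: "a \<noteq> 0" "b \<noteq> 0" "x = of_int a / of_int b" using rat_as_frac assms by blast
  obtain c d where cd: "c \<noteq> 0" "d \<noteq> 0" "y = of_int c / of_int d" using rat_as_frac assms by blast
  have e: "x * y = of_int (a*c) / of_int (b*d)" using ab cd by simp
  have "vq q (x * y) = int (multiplicity (int q) (a*c)) - int (multiplicity (int q) (b*d))"
    unfolding e using ab cd q by (intro vq_frac) auto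
  thus ?thesis using ab cd q by (simp add: vq_frac prime_elem_multiplicity_mult_distrib)
qed

lemma vq_inverse:
  assumes q: "prime q" shows "vq q (inverse x) = - vq q x"
proof (cases "x = 0")
  case True thus ?thesis by (simp add: vq_def)
next
  case False
  obtain a b where ab: "a \<noteq> 0" "b \<noteq> 0" "x = of_int a / of_int b" using rat_as_frac False by blast
  have "inverse x = of_int b / of_int a" using ab by simp
  thus ?thesis using ab q by (simp add: vq_frac)
qed

lemma vq_divide:
  assumes q: "prime q" and "x \<noteq> 0" "y \<noteq> 0"
  shows "vq q (x / y) = vq q x - vq q y"
  using vq_mult[OF q, of x "inverse y"] vq_inverse[OF q, of y] assms by (simp add: divide_inverse)

lemma vq_one [simp]: "vq q 1 = 0" by (simp add: vq_def)

lemma vq_power: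
  assumes q: "prime q" and "x \<noteq> 0"
  shows "vq q (x ^ m) = int m * vq q x"
  using assms by (induction m) (auto simp: vq_mult algebra_simps)

lemma vq_prod:
  assumes q: "prime q" and "finite A" and "\<And>a. a \<in> A \<Longrightarrow> f a \<noteq> 0"
  shows "vq q (\<Prod>a\<in>A. f a) = (\<Sum>a\<in>A. vq q (f a))"
  using assms(2,3)
proof (induction A rule: finite_induct)
  case empty thus ?case by simp
next
  case (insert a A) thus ?case using q by (simp add: vq_mult)
qed

lemma mult_uminus_int: "multiplicity r (- a) = multiplicity r (a::int)"
  using multiplicity_normalize_right[of r "-a"] multiplicity_normalize_right[of r a] by simp

lemma vq_uminus: assumes q: "prime q" shows "vq q (- x) = vq q x"
proof (cases "x = 0")
  case True thus ?thesis by simp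
next
  case False
  obtain a b where ab: "a \<noteq> 0" "b \<noteq> 0" "x = of_int a / of_int b" using rat_as_frac False by blast
  have e: "- x = of_int (-a) / of_int b" using ab by simp
  have "vq q (- x) = int (multiplicity (int q) (-a)) - int (multiplicity (int q) b)"
    unfolding e using ab q by (intro vq_frac) auto
  thus ?thesis using ab q by (simp add: vq_frac mult_uminus_int)
qed

definition vge :: "nat \<Rightarrow> rat \<Rightarrow> int \<Rightarrow> bool" where
  "vge q x B \<longleftrightarrow> x = 0 \<or> B \<le> vq q x"

lemma vge_0 [simp]: "vge q 0 B" by (simp add: vge_def)

lemma vge_mono: "vge q x B \<Longrightarrow> B' \<le> B \<Longrightarrow> vge q x B'"
  by (auto simp: vge_def)

lemma vge_mult: "prime q \<Longrightarrow> vge q x A \<Longrightarrow> vge q y B \<Longrightarrow> vge q (x * y) (A + B)"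
  by (cases "x = 0 \<or> y = 0") (auto simp: vge_def vq_mult)

lemma vge_uminus: "prime q \<Longrightarrow> vge q (-x) B \<longleftrightarrow> vge q x B"
  by (simp add: vge_def vq_uminus)

lemma vge_add:
  assumes q: "prime q" and x: "vge q x B" and y: "vge q y B"
  shows "vge q (x + y) B"
proof (cases "x = 0 \<or> y = 0 \<or> x + y = 0")
  case True thus ?thesis using x y by (auto simp: vge_def)
next
  case False
  obtain a b where ab: "a \<noteq> 0" "b \<noteq> 0" "x = of_int a / of_int b" using rat_as_frac False by blast
  obtain c d where cd: "c \<noteq> 0" "d \<noteq> 0" "y = of_int c / of_int d" using rat_as_frac False by blast
  have xy: "x + y = of_int (a*d + c*b) / of_int (b*d)" using ab cd by (simp add: field_simps)
  have "of_int (a*d + c*b) / of_int (b*d) \<noteq> (0::rat)" using False xy by simp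
  hence nz: "a*d + c*b \<noteq> 0" by (metis div_0 of_int_0)
  let ?m = "\<lambda>z. int (multiplicity (int q) z)"
  have qq: "prime (int q)" using q by simp
  have vx: "B \<le> ?m a - ?m b" using x False ab q by (simp add: vge_def vq_frac)
  have vy: "B \<le> ?m c - ?m d" using y False cd q by (simp add: vge_def vq_frac)
  have goal: "B \<le> ?m (a*d + c*b) - ?m (b*d)"
  proof (cases "B + ?m b + ?m d \<le> 0")
    case True thus ?thesis using qq ab cd by (simp add: prime_elem_multiplicity_mult_distrib)
  next
    case False
    define N where "N = nat (B + ?m b + ?m d)"
    have "N \<le> multiplicity (int q) (a*d)" using vx False qq ab cd
      by (simp add: N_def prime_elem_multiplicity_mult_distrib)
    hence d1: "int q ^ N dvd a*d" by (rule multiplicity_dvd')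
    have "N \<le> multiplicity (int q) (c*b)" using vy False qq ab cd
      by (simp add: N_def prime_elem_multiplicity_mult_distrib)
    hence d2: "int q ^ N dvd c*b" by (rule multiplicity_dvd')
    have "int q ^ N dvd a*d + c*b" using d1 d2 by simp
    hence "N \<le> multiplicity (int q) (a*d + c*b)"
      using nz qq by (intro multiplicity_geI) (auto simp: prime_elem_def)
    thus ?thesis using False qq ab cd by (simp add: N_def prime_elem_multiplicity_mult_distrib)
  qed
  have "vq q (x + y) = int (multiplicity (int q) (a*d + c*b)) - int (multiplicity (int q) (b*d))"
    unfolding xy using nz ab cd q by (intro vq_frac) auto
  thus ?thesis using goal by (simp add: vge_def)
qed

lemma vge_sum:
  assumes q: "prime q" and "\<And>a. a \<in> A \<Longrightarrow> vge q (f a) B"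
  shows "vge q (\<Sum>a\<in>A. f a) B"
  using assms(2)
  by (induction A rule: infinite_finite_induct) (auto intro: vge_add[OF q])

lemma vge_prod:
  assumes q: "prime q" and "finite A" and "\<And>a. a \<in> A \<Longrightarrow> vge q (f a) (B a)"
  shows "vge q (\<Prod>a\<in>A. f a) (\<Sum>a\<in>A. B a)"
  using assms(2,3)
proof (induction A rule: finite_induct)
  case empty thus ?case using q by (simp add: vge_def)
next
  case (insert a A) thus ?case using vge_mult[OF q] by simp
qed

lemma vge_int: "prime q \<Longrightarrow> vge q (of_int z) 0"
  by (cases "z = 0") (auto simp: vge_def vq_int)

lemma vge_nat: "prime q \<Longrightarrow> vge q (of_nat z) 0"
  using vge_int[of q "int z"] by simp

lemma vge_iff: "x \<noteq> 0 \<Longrightarrow> vge q x B \<longleftrightarrow> B \<le> vq q x"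
  by (simp add: vge_def)

lemma int_criterion:
  assumes "\<And>q. prime q \<Longrightarrow> vge q x 0"
  shows "x \<in> (\<int> :: rat set)"
proof (cases "x = 0")
  case True thus ?thesis by simp
next
  case False
  obtain a b where qo: "quotient_of x = (a, b)" by fastforce
  have x: "x = of_int a / of_int b" using quotient_of_div[OF qo] .
  have b: "b > 0" using quotient_of_denom_pos[OF qo] .
  have a: "a \<noteq> 0" using False x by auto
  have "b dvd a"
  proof (rule multiplicity_le_imp_dvd)
    show "b \<noteq> 0" using b by simp
    fix r :: int assume r: "prime r"
    hence r0: "r \<ge> 0" by (simp add: prime_ge_0_int)
    hence rn: "prime (nat r)" using r by (simp add: prime_nat_iff_prime)
    have "0 \<le> vq (nat r) x" using assms[OF rn] False by (simp add: vge_def)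
    thus "multiplicity r b \<le> multiplicity r a" using vq_frac[OF rn a, of b] b x r0 by simp
  qed
  then obtain c where "a = b * c" by blast
  hence "x = of_int c" using x b by simp
  thus ?thesis by simp
qed

definition fgood :: "nat \<Rightarrow> int \<Rightarrow> int \<Rightarrow> rat fps \<Rightarrow> bool" where
  "fgood q B e f \<longleftrightarrow> (\<forall>m. vge q (f $ m) (B - int m * e))"

lemma fgoodD: "fgood q B e f \<Longrightarrow> vge q (f $ m) (B - int m * e)"
  by (simp add: fgood_def)

lemma fgood_mono: "fgood q B e f \<Longrightarrow> B' \<le> B \<Longrightarrow> e \<le> e' \<Longrightarrow> fgood q B' e' f"
  unfolding fgood_def
proof (intro allI)
  fix m assume a: "\<forall>m. vge q (f $ m) (B - int m * e)" "B' \<le> B" "e \<le> e'"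
  have "int m * e \<le> int m * e'" using a(3) by (simp add: mult_left_mono)
  thus "vge q (f $ m) (B' - int m * e')" using a by (auto intro: vge_mono)
qed

lemma fgood_mult:
  assumes q: "prime q" and f: "fgood q B1 e f" and g: "fgood q B2 e g"
  shows "fgood q (B1 + B2) e (f * g)"
  unfolding fgood_def
proof
  fix m
  have "vge q (\<Sum>i=0..m. f$i * g$(m - i)) (B1 + B2 - int m * e)"
  proof (rule vge_sum[OF q])
    fix i assume i: "i \<in> {0..m}"
    have "vge q (f$i * g$(m - i)) ((B1 - int i * e) + (B2 - int (m - i) * e))"
      using vge_mult[OF q fgoodD[OF f] fgoodD[OF g]] .
    moreover have "(B1 - int i * e) + (B2 - int (m - i) * e) = B1 + B2 - int m * e"
      using i by (simp add: of_nat_diff algebra_simps)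
    ultimately show "vge q (f$i * g$(m - i)) (B1 + B2 - int m * e)" by simp
  qed
  thus "vge q ((f * g) $ m) (B1 + B2 - int m * e)" by (simp add: fps_mult_nth)
qed

lemma fgood_add:
  assumes q: "prime q" and f: "fgood q B e f" and g: "fgood q B e g"
  shows "fgood q B e (f + g)"
  using assms unfolding fgood_def by (auto intro: vge_add)

lemma fgood_sum:
  assumes q: "prime q" and "\<And>a. a \<in> A \<Longrightarrow> fgood q B e (f a)"
  shows "fgood q B e (\<Sum>a\<in>A. f a)"
  using assms unfolding fgood_def by (auto simp: fps_sum_nth intro!: vge_sum)

lemma fgood_one: "prime q \<Longrightarrow> 0 \<le> e \<Longrightarrow> fgood q 0 e 1"
  by (auto simp: fgood_def vge_def)

lemma fgood_prod:
  assumes q: "prime q" and e: "0 \<le> e" and A: "finite A" and "\<And>a. a \<in> A \<Longrightarrow> fgood q (B a) e (f a)"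
  shows "fgood q (\<Sum>a\<in>A. B a) e (\<Prod>a\<in>A. f a)"
  using A assms(4)
proof (induction A rule: finite_induct)
  case empty thus ?case using fgood_one[OF q e] by simp
next
  case (insert a A) thus ?case using fgood_mult[OF q] by simp
qed

lemma fgood_power:
  assumes q: "prime q" and e: "0 \<le> e" and f: "fgood q B e f"
  shows "fgood q (int k * B) e (f ^ k)"
  using fgood_prod[OF q e, of "{..<k}" "\<lambda>_. B" "\<lambda>_. f"] f by simp

lemma fgood_const:
  assumes "vge q c B" "0 \<le> e"
  shows "fgood q B e (fps_const c)"
  unfolding fgood_def
proof
  fix m show "vge q (fps_const c $ m) (B - int m * e)"
    using assms by (cases m) (auto intro: vge_mono)
qed

lemma fgood_lin:
  assumes "vge q a B" "vge q b (B - e)" "0 \<le> e"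
  shows "fgood q B e (fps_const a + fps_const b * fps_X)"
  unfolding fgood_def
proof
  fix m show "vge q ((fps_const a + fps_const b * fps_X) $ m) (B - int m * e)"
    using assms by (cases m) (auto intro: vge_mono)
qed

lemma inverse_lin:
  assumes c: "c \<noteq> (0::rat)"
  shows "inverse (fps_const c + fps_X) = Abs_fps (\<lambda>m. (-1)^m / c^(m+1))"
proof (rule fps_inverse_unique)
  show "(fps_const c + fps_X) * Abs_fps (\<lambda>m. (-1)^m / c^(m+1)) = 1"
  proof (rule fps_ext)
    fix m show "((fps_const c + fps_X) * Abs_fps (\<lambda>m. (-1)^m / c^(m+1))) $ m = (1::rat fps) $ m"
      using c by (cases m) (simp_all add: distrib_right field_simps)
  qed
qed

lemma vq_m1pow: "prime q \<Longrightarrow> vq q ((-1)^m) = 0"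
  by (induction m) (simp_all add: vq_mult vq_uminus)

lemma fgood_inv:
  assumes q: "prime q" and c: "c \<noteq> 0" and ce: "vq q c \<le> e"
  shows "fgood q (- vq q c) e (inverse (fps_const c + fps_X))"
  unfolding fgood_def inverse_lin[OF c]
proof
  fix m
  have "vq q ((-1)^m / c^(m+1)) = vq q ((-1)^m) - vq q (c^(m+1))"
    using q c by (intro vq_divide) auto
  also have "\<dots> = - (int m + 1) * vq q c"
    by (simp only: vq_m1pow[OF q] vq_power[OF q c]) (simp add: algebra_simps)
  finally have v: "vq q ((-1)^m / c^(m+1)) = - (int m + 1) * vq q c" .
  have "int m * vq q c \<le> int m * e" using ce by (simp add: mult_left_mono)
  hence "- vq q c - int m * e \<le> vq q ((-1)^m / c^(m+1))" using v by (simp add: algebra_simps)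
  thus "vge q (Abs_fps (\<lambda>m. (-1)^m / c^(m+1)) $ m) (- vq q c - int m * e)"
    by (simp add: vge_def)
qed

lemma fgood_Xinv:
  assumes q: "prime q" and c: "c \<noteq> 0" and ce: "vq q c \<le> e"
  shows "fgood q 0 e (fps_X * inverse (fps_const c + fps_X))"
  unfolding fgood_def inverse_lin[OF c]
proof
  fix m
  show "vge q ((fps_X * Abs_fps (\<lambda>m. (-1)^m / c^(m+1))) $ m) (0 - int m * e)"
  proof (cases m)
    case 0 thus ?thesis by simp
  next
    case (Suc k)
    have "vq q ((-1)^k / c^(k+1)) = vq q ((-1)^k) - vq q (c^(k+1))"
      using q c by (intro vq_divide) auto
    also have "\<dots> = - (int k + 1) * vq q c"
      by (simp only: vq_m1pow[OF q] vq_power[OF q c]) (simp add: algebra_simps)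
    finally have v: "vq q ((-1)^k / c^(k+1)) = - (int k + 1) * vq q c" .
    have "(int k + 1) * vq q c \<le> (int k + 1) * e" using ce by (simp add: mult_left_mono)
    hence "0 - int m * e \<le> vq q ((-1)^k / c^(k+1))" using v Suc by (simp add: algebra_simps)
    thus ?thesis using Suc by (simp add: vge_def)
  qed
qed

definition shiftp :: "rat \<Rightarrow> rat poly \<Rightarrow> rat poly" where
  "shiftp c P = pcompose P [:c, 1:]"

lemma poly_shiftp [simp]: "poly (shiftp c P) x = poly P (c + x)"
  by (simp add: shiftp_def poly_pcompose)

lemma shiftp_shiftp: "shiftp a (shiftp b P) = shiftp (b + a) P"
  by (simp add: poly_eq_poly_eq_iff[symmetric] fun_eq_iff add.assoc)

lemma shiftp_0 [simp]: "shiftp 0 P = P"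
  by (simp add: poly_eq_poly_eq_iff[symmetric] fun_eq_iff)

lemma shiftp_inv [simp]: "shiftp (- a) (shiftp a P) = P" "shiftp a (shiftp (-a) P) = P"
  by (simp_all add: shiftp_shiftp)

lemma shiftp_mult: "shiftp c (P * Q) = shiftp c P * shiftp c Q"
  by (simp add: shiftp_def pcompose_mult)

lemma shiftp_diff: "shiftp c (P - Q) = shiftp c P - shiftp c Q"
  by (simp add: shiftp_def pcompose_diff)

lemma shiftp_add: "shiftp c (P + Q) = shiftp c P + shiftp c Q"
  by (simp add: shiftp_def pcompose_add)

lemma degree_shiftp [simp]: "degree (shiftp c P) = degree P"
  by (simp add: shiftp_def degree_pcompose)

lemma shiftp_monom: "shiftp c (monom 1 S) = [:c, 1:] ^ S"
  by (simp add: poly_eq_poly_eq_iff[symmetric] fun_eq_iff poly_monom add.commute)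

lemma shiftp_eq_0_iff: "shiftp c P = 0 \<longleftrightarrow> P = 0"
  by (metis shiftp_inv(1) shiftp_def pcompose_0)

definition Dk :: "nat set \<Rightarrow> nat \<Rightarrow> nat \<Rightarrow> rat poly" where
  "Dk K S k = (\<Prod>l\<in>K-{k}. [:of_nat l, 1:] ^ S)"

definition Lf :: "rat poly \<Rightarrow> nat set \<Rightarrow> nat \<Rightarrow> nat \<Rightarrow> rat fps" where
  "Lf A K S k = fps_of_poly (shiftp (- of_nat k) A) * inverse (fps_of_poly (shiftp (- of_nat k) (Dk K S k)))"

definition Pk :: "rat poly \<Rightarrow> nat set \<Rightarrow> nat \<Rightarrow> nat \<Rightarrow> rat poly" where
  "Pk A K S k = truncate_fps S (Lf A K S k)"

lemma poly_Dk: "poly (Dk K S k) t = (\<Prod>l\<in>K-{k}. (t + of_nat l) ^ S)"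
  by (simp add: Dk_def poly_prod add.commute)

lemma Dk_nz_at: "finite K \<Longrightarrow> poly (Dk K S k) (- of_nat k) \<noteq> 0"
  by (simp add: poly_Dk)

lemma W0: "finite K \<Longrightarrow> fps_of_poly (shiftp (- of_nat k) (Dk K S k)) $ 0 \<noteq> 0"
  using Dk_nz_at[of K S k] by (simp add: poly_0_coeff_0[symmetric])

lemma local_dvd:
  assumes K: "finite K"
  shows "[:of_nat k, 1:] ^ S dvd (A - shiftp (of_nat k) (Pk A K S k) * Dk K S k)"
proof -
  define F where "F = A - shiftp (of_nat k) (Pk A K S k) * Dk K S k"
  define W where "W = shiftp (- of_nat k) (Dk K S k)"
  define L where "L = Lf A K S k"
  have sF: "shiftp (- of_nat k) F = shiftp (- of_nat k) A - Pk A K S k * W"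
    by (simp add: F_def W_def shiftp_diff shiftp_mult)
  have fA: "fps_of_poly (shiftp (- of_nat k) A) = L * fps_of_poly W"
    using inverse_mult_eq_1[OF W0[OF K, where S=S and k=k]]
    by (simp add: L_def Lf_def W_def mult.assoc)
  have fF: "fps_of_poly (shiftp (- of_nat k) F) = (L - fps_cutoff S L) * fps_of_poly W"
    by (simp add: sF fps_of_poly_diff fps_of_poly_mult fA Pk_def L_def algebra_simps)
  have "\<forall>m<S. coeff (shiftp (- of_nat k) F) m = 0"
  proof (intro allI impI)
    fix m assume m: "m < S"
    have "coeff (shiftp (- of_nat k) F) m = ((L - fps_cutoff S L) * fps_of_poly W) $ m"
      using fF by (metis fps_of_poly_nth)
    also have "\<dots> = 0" unfolding fps_mult_nth using m by (intro sum.neutral) auto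
    finally show "coeff (shiftp (- of_nat k) F) m = 0" .
  qed
  hence "monom 1 S dvd shiftp (- of_nat k) F" by (simp add: monom_1_dvd_iff')
  then obtain Q where "shiftp (- of_nat k) F = monom 1 S * Q" by blast
  hence "shiftp (of_nat k) (shiftp (- of_nat k) F) = shiftp (of_nat k) (monom 1 S) * shiftp (of_nat k) Q"
    by (simp add: shiftp_mult)
  hence "F = [:of_nat k, 1:] ^ S * shiftp (of_nat k) Q" by (simp add: shiftp_monom)
  thus ?thesis unfolding F_def by (metis dvd_triv_left)
qed

lemma coprime_lin:
  assumes "a \<noteq> b"
  shows "coprime [:a, 1:] ([:b, 1:] :: rat poly)"
proof (rule coprimeI)
  fix c assume "c dvd [:a, 1:]" "c dvd [:b, 1:]"
  hence "c dvd [:a, 1:] - [:b, 1:]" by (rule dvd_diff)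
  hence "c dvd [:a - b:]" by simp
  moreover have "is_unit [:a - b:]" using assms by (simp add: is_unit_const_poly_iff dvd_field_iff)
  ultimately show "is_unit c" by (rule dvd_unit_imp_unit)
qed

lemma coprime_lin_pow:
  assumes "a \<noteq> b"
  shows "coprime ([:a, 1:] ^ S) ([:b, 1:] ^ T :: rat poly)"
  using coprime_lin[OF assms] by simp

lemma coprime_Dk:
  assumes K: "finite K"
  shows "coprime ([:of_nat k, 1:] ^ S) (Dk K S k)"
  unfolding Dk_def by (intro prod_coprime_right coprime_lin_pow) auto

lemma prod_dvd_coprime:
  assumes "finite K" "\<And>k. k \<in> K \<Longrightarrow> f k dvd (x :: rat poly)"
    "\<And>k l. k \<in> K \<Longrightarrow> l \<in> K \<Longrightarrow> k \<noteq> l \<Longrightarrow> coprime (f k) (f l)"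
  shows "prod f K dvd x"
  using assms
proof (induction K rule: finite_induct)
  case empty thus ?case by simp
next
  case (insert a K)
  have "coprime (f a) (prod f K)"
    using insert.prems(2) insert.hyps(2) by (intro prod_coprime_right) auto
  thus ?case using insert by (simp add: divides_mult)
qed

lemma degree_Dk:
  assumes K: "finite K" and k: "k \<in> K"
  shows "degree (Dk K S k) = S * (card K - 1)"
proof -
  have "degree (Dk K S k) = (\<Sum>l\<in>K-{k}. degree ([:of_nat l, 1:] ^ S :: rat poly))"
    unfolding Dk_def by (rule degree_prod_eq_sum_degree) auto
  also have "\<dots> = (\<Sum>l\<in>K-{k}. S)" by (simp add: degree_power_eq)
  also have "\<dots> = S * (card K - 1)" using K k by simp
  finally show ?thesis .
qed

lemma pf_main:
  fixes A :: "rat poly"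
  assumes K: "finite K" and S: "S > 0" and degA: "degree A < S * card K"
  shows "A = (\<Sum>k\<in>K. shiftp (of_nat k) (Pk A K S k) * Dk K S k)"
proof -
  define T where "T = (\<Sum>k\<in>K. shiftp (of_nat k) (Pk A K S k) * Dk K S k)"
  define D where "D = (\<Prod>k\<in>K. [:of_nat k, 1:] ^ S :: rat poly)"
  have Kne: "K \<noteq> {}" using degA by auto
  hence cK: "card K \<ge> 1" using K by (simp add: Suc_le_eq card_gt_0_iff)
  have dvd_each: "[:of_nat k, 1:] ^ S dvd (A - T)" if k: "k \<in> K" for k
  proof -
    have "A - T = (A - shiftp (of_nat k) (Pk A K S k) * Dk K S k)
                  - (\<Sum>k'\<in>K-{k}. shiftp (of_nat k') (Pk A K S k') * Dk K S k')"
      unfolding T_def using K k by (simp add: sum.remove)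
    moreover have "[:of_nat k, 1:] ^ S dvd (\<Sum>k'\<in>K-{k}. shiftp (of_nat k') (Pk A K S k') * Dk K S k')"
    proof (rule dvd_sum)
      fix k' assume k': "k' \<in> K - {k}"
      have "[:of_nat k, 1:] ^ S dvd Dk K S k'"
        unfolding Dk_def using K k k' by (intro dvd_prodI) auto
      thus "[:of_nat k, 1:] ^ S dvd shiftp (of_nat k') (Pk A K S k') * Dk K S k'" by simp
    qed
    ultimately show ?thesis using local_dvd[OF K, of k S A] by (metis dvd_diff)
  qed
  have "D dvd (A - T)" unfolding D_def
    by (rule prod_dvd_coprime[OF K]) (auto intro: dvd_each coprime_lin)
  have degD: "degree D = S * card K"
  proof -
    have "degree D = (\<Sum>l\<in>K. degree ([:of_nat l, 1:] ^ S :: rat poly))"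
      unfolding D_def by (rule degree_prod_eq_sum_degree) auto
    also have "\<dots> = S * card K" by (simp add: degree_power_eq)
    finally show ?thesis .
  qed
  have degT: "degree T < S * card K"
  proof -
    have "degree T \<le> S - 1 + S * (card K - 1)"
      unfolding T_def
    proof (rule degree_sum_le[OF K])
      fix k assume k: "k \<in> K"
      have "degree (shiftp (of_nat k) (Pk A K S k) * Dk K S k)
              \<le> degree (shiftp (of_nat k) (Pk A K S k)) + degree (Dk K S k)"
        by (rule degree_mult_le)
      also have "\<dots> \<le> S - 1 + S * (card K - 1)"
        using degree_truncate_fps[OF S, of "Lf A K S k"] degree_Dk[OF K k, of S]
        by (simp add: Pk_def)
      finally show "degree (shiftp (of_nat k) (Pk A K S k) * Dk K S k) \<le> S - 1 + S * (card K - 1)" .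
    qed
    also have "\<dots> < S * card K"
    proof -
      have "S * card K = S + S * (card K - 1)" using cK
        by (metis Suc_diff_1 less_le_trans mult_Suc_right zero_less_one)
      thus ?thesis using S by linarith
    qed
    finally show ?thesis .
  qed
  have "A - T = 0"
  proof (rule ccontr)
    assume nz: "A - T \<noteq> 0"
    have "degree D \<le> degree (A - T)" by (rule dvd_imp_degree_le) fact+
    moreover have "degree (A - T) < S * card K"
      using degree_diff_le_max[of A T] degA degT by linarith
    ultimately show False using degD by linarith
  qed
  thus ?thesis unfolding T_def by simp
qed

lemma poly_truncate_fps:
  fixes F :: "rat fps"
  assumes S: "S > 0"
  shows "poly (truncate_fps S F) y = (\<Sum>m<S. F $ m * y ^ m)"
proof -
  have "poly (truncate_fps S F) y = (\<Sum>i\<le>degree (truncate_fps S F). coeff (truncate_fps S F) i * y ^ i)"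
    by (rule poly_altdef)
  also have "\<dots> = (\<Sum>i<S. coeff (truncate_fps S F) i * y ^ i)"
  proof (rule sum.mono_neutral_left)
    show "{..degree (truncate_fps S F)} \<subseteq> {..<S}" using degree_truncate_fps[OF S, of F] by auto
    show "\<forall>i\<in>{..<S} - {..degree (truncate_fps S F)}. coeff (truncate_fps S F) i * y ^ i = 0"
      by (auto simp: coeff_eq_0)
  qed simp
  also have "\<dots> = (\<Sum>m<S. F $ m * y ^ m)" by (simp add: coeff_truncate_fps)
  finally show ?thesis .
qed

lemma sum_reindex_S:
  fixes f :: "nat \<Rightarrow> rat"
  assumes y: "y \<noteq> 0"
  shows "(\<Sum>m<S. f m * y ^ m) / y ^ S = (\<Sum>i=1..S. f (S - i) / y ^ i)"
proof -
  have "(\<Sum>m<S. f m * y ^ m) / y ^ S = (\<Sum>m<S. f m / y ^ (S - m))"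
    unfolding sum_divide_distrib
  proof (rule sum.cong)
    fix m assume "m \<in> {..<S}"
    hence "y ^ S = y ^ m * y ^ (S - m)" by (simp add: power_add[symmetric])
    thus "f m * y ^ m / y ^ S = f m / y ^ (S - m)" using y by simp
  qed simp
  also have "\<dots> = (\<Sum>i=1..S. f (S - i) / y ^ i)"
    by (rule sum.reindex_bij_witness[of _ "\<lambda>i. S - i" "\<lambda>m. S - m"]) auto
  finally show ?thesis .
qed

lemma pf_eval:
  fixes A :: "rat poly"
  assumes K: "finite K" and S: "S > 0" and degA: "degree A < S * card K"
    and t: "\<forall>k\<in>K. t + of_nat k \<noteq> 0"
  shows "poly A t / (\<Prod>k\<in>K. (t + of_nat k) ^ S) = (\<Sum>i=1..S. \<Sum>k\<in>K. Lf A K S k $ (S - i) / (t + of_nat k) ^ i)"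
proof -
  define Dt where "Dt = (\<Prod>k\<in>K. (t + of_nat k) ^ S)"
  have split: "Dt = (t + of_nat k) ^ S * poly (Dk K S k) t" if "k \<in> K" for k
    unfolding Dt_def poly_Dk using K that by (simp add: prod.remove)
  have "poly A t = (\<Sum>k\<in>K. poly (Pk A K S k) (of_nat k + t) * poly (Dk K S k) t)"
    by (subst pf_main[OF K S degA]) (simp add: poly_sum)
  hence "poly A t / Dt = (\<Sum>k\<in>K. poly (Pk A K S k) (of_nat k + t) * poly (Dk K S k) t / Dt)"
    by (simp add: sum_divide_distrib)
  also have "\<dots> = (\<Sum>k\<in>K. poly (Pk A K S k) (t + of_nat k) / (t + of_nat k) ^ S)"
  proof (rule sum.cong)
    fix k assume k: "k \<in> K"
    have "poly (Dk K S k) t \<noteq> 0" using t K by (simp add: poly_Dk)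
    thus "poly (Pk A K S k) (of_nat k + t) * poly (Dk K S k) t / Dt = poly (Pk A K S k) (t + of_nat k) / (t + of_nat k) ^ S"
      using split[OF k] by (simp add: add.commute)
  qed simp
  also have "\<dots> = (\<Sum>k\<in>K. \<Sum>i=1..S. Lf A K S k $ (S - i) / (t + of_nat k) ^ i)"
  proof (rule sum.cong)
    fix k assume k: "k \<in> K"
    show "poly (Pk A K S k) (t + of_nat k) / (t + of_nat k) ^ S = (\<Sum>i=1..S. Lf A K S k $ (S - i) / (t + of_nat k) ^ i)"
      unfolding Pk_def poly_truncate_fps[OF S] using t k by (intro sum_reindex_S) auto
  qed simp
  also have "\<dots> = (\<Sum>i=1..S. \<Sum>k\<in>K. Lf A K S k $ (S - i) / (t + of_nat k) ^ i)"
    by (rule sum.swap)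
  finally show ?thesis unfolding Dt_def .
qed

lemma pf_unique:
  fixes c :: "nat \<Rightarrow> nat \<Rightarrow> rat"
  assumes K: "finite K" and S: "S > 0" and Fin: "finite Fin" and KF: "\<forall>k\<in>K. - of_nat k \<in> Fin"
    and z: "\<forall>t. t \<notin> Fin \<longrightarrow> (\<Sum>i=1..S. \<Sum>k\<in>K. c i k / (t + of_nat k) ^ i) = 0"
    and i: "i \<in> {1..S}" and k: "k \<in> K"
  shows "c i k = 0"
proof -
  define Q where "Q k = (\<Sum>i=1..S. monom (c i k) (S - i))" for k
  have polyQ: "poly (Q k) y = (\<Sum>i=1..S. c i k * y ^ (S - i))" for k y
    by (simp add: Q_def poly_sum poly_monom)
  have degQ: "degree (Q k) < S" for k
    unfolding Q_def using S by (intro degree_sum_less) (auto intro: le_less_trans[OF degree_monom_le])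
  define Z where "Z = (\<Sum>k\<in>K. shiftp (of_nat k) (Q k) * Dk K S k)"
  have Zt: "poly Z t = 0" if t: "t \<notin> Fin" for t
  proof -
    have tk: "t + of_nat k \<noteq> 0" if kk: "k \<in> K" for k
    proof
      assume "t + of_nat k = 0"
      hence "t = - of_nat k" by (simp add: eq_neg_iff_add_eq_0)
      thus False using KF kk t by auto
    qed
    define Dt where "Dt = (\<Prod>k\<in>K. (t + of_nat k) ^ S)"
    have Dt0: "Dt \<noteq> 0" using tk K by (simp add: Dt_def)
    have split: "Dt = (t + of_nat k) ^ S * poly (Dk K S k) t" if "k \<in> K" for k
      unfolding Dt_def poly_Dk using K that by (simp add: prod.remove)
    have "poly Z t / Dt = (\<Sum>k\<in>K. poly (Q k) (t + of_nat k) / (t + of_nat k) ^ S)"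
      unfolding Z_def poly_sum sum_divide_distrib
    proof (rule sum.cong)
      fix k assume k: "k \<in> K"
      have "poly (Dk K S k) t \<noteq> 0" using tk K by (simp add: poly_Dk)
      thus "poly (shiftp (of_nat k) (Q k) * Dk K S k) t / Dt = poly (Q k) (t + of_nat k) / (t + of_nat k) ^ S"
        using split[OF k] by (simp add: add.commute)
    qed simp
    also have "\<dots> = (\<Sum>k\<in>K. \<Sum>i=1..S. c i k / (t + of_nat k) ^ i)"
    proof (rule sum.cong)
      fix k assume k: "k \<in> K"
      show "poly (Q k) (t + of_nat k) / (t + of_nat k) ^ S = (\<Sum>i=1..S. c i k / (t + of_nat k) ^ i)"
        unfolding polyQ sum_divide_distrib
      proof (rule sum.cong)
        fix i assume i: "i \<in> {1..S}"
        hence "(t + of_nat k) ^ S = (t + of_nat k) ^ (S - i) * (t + of_nat k) ^ i"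
          by (simp add: power_add[symmetric])
        thus "c i k * (t + of_nat k) ^ (S - i) / (t + of_nat k) ^ S = c i k / (t + of_nat k) ^ i"
          using tk[OF k] by simp
      qed simp
    qed simp
    also have "\<dots> = 0" using z t by (subst sum.swap) simp
    finally show ?thesis using Dt0 by simp
  qed
  have "Z = 0"
  proof (rule ccontr)
    assume "Z \<noteq> 0"
    hence "finite {t. poly Z t = 0}" by (rule poly_roots_finite)
    moreover have "UNIV - Fin \<subseteq> {t. poly Z t = 0}" using Zt by auto
    ultimately have "finite (UNIV - Fin)" by (rule finite_subset[rotated])
    hence "finite ((UNIV - Fin) \<union> Fin)" using Fin by (rule finite_UnI)
    hence "finite (UNIV :: rat set)" by simp
    thus False using infinite_UNIV_char_0 by blast
  qed
  have "[:of_nat k, 1:] ^ S dvd shiftp (of_nat k) (Q k) * Dk K S k"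
  proof -
    have "shiftp (of_nat k) (Q k) * Dk K S k = Z - (\<Sum>k'\<in>K-{k}. shiftp (of_nat k') (Q k') * Dk K S k')"
      unfolding Z_def using K k by (simp add: sum.remove)
    also have "[:of_nat k, 1:] ^ S dvd \<dots>"
      unfolding \<open>Z = 0\<close>
    proof (intro dvd_diff dvd_0_right dvd_sum)
      fix k' assume k': "k' \<in> K - {k}"
      have "[:of_nat k, 1:] ^ S dvd Dk K S k'"
        unfolding Dk_def using K k k' by (intro dvd_prodI) auto
      thus "[:of_nat k, 1:] ^ S dvd shiftp (of_nat k') (Q k') * Dk K S k'" by simp
    qed
    finally show ?thesis .
  qed
  hence dv: "[:of_nat k, 1:] ^ S dvd shiftp (of_nat k) (Q k)"
    using coprime_Dk[OF K, of k S] by (simp add: coprime_dvd_mult_left_iff)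
  have "shiftp (of_nat k) (Q k) = 0"
  proof (rule ccontr)
    assume nz: "shiftp (of_nat k) (Q k) \<noteq> 0"
    have "degree ([:of_nat k, 1:] ^ S :: rat poly) \<le> degree (shiftp (of_nat k) (Q k))"
      by (rule dvd_imp_degree_le[OF dv nz])
    thus False using degQ[of k] by (simp add: degree_power_eq)
  qed
  hence Q0: "Q k = 0" by (simp add: shiftp_eq_0_iff)
  have "coeff (Q k) (S - i) = (\<Sum>i'=1..S. if S - i' = S - i then c i' k else 0)"
    by (simp add: Q_def coeff_sum coeff_monom)
  also have "\<dots> = (\<Sum>i'\<in>{i}. c i' k)"
  proof (rule sum.mono_neutral_cong_right)
    show "\<forall>x\<in>{1..S} - {i}. (if S - x = S - i then c x k else 0) = 0" using i by auto
  qed (use i in auto)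
  finally show ?thesis using Q0 by simp
qed

definition Apoly :: "nat \<Rightarrow> nat \<Rightarrow> nat \<Rightarrow> rat poly" where
  "Apoly p s n = smult (of_nat (p ^ n * fact n ^ s))
     ([:0, 1:] ^ (M0 p s - (p - 1 + s)) * (\<Prod>j\<in>{1..p-1}. \<Prod>u<n. [:of_nat (j + p * u), of_nat p:]))"

lemma poly_Apoly:
  "poly (Apoly p s n) t = of_nat (p ^ n * fact n ^ s) * t ^ (M0 p s - (p - 1 + s)) *
     (\<Prod>j\<in>{1..p-1}. \<Prod>u<n. (of_nat (j + p * u) + of_nat p * t))"
  by (simp add: Apoly_def poly_prod mult.commute)

lemma poch_shift: "pochhammer (t::rat) (Suc n) = t * (\<Prod>k\<in>{1..n}. (t + of_nat k))"
proof -
  have "pochhammer (t + 1) n = (\<Prod>i\<in>{0..<n}. t + 1 + of_nat i)" by (simp add: pochhammer_prod)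
  also have "\<dots> = (\<Prod>k\<in>{1..n}. (t + of_nat k))"
    by (rule prod.reindex_bij_witness[of _ "\<lambda>k. k - 1" "\<lambda>i. i + 1"]) (auto simp: add.assoc)
  finally show ?thesis by (simp add: pochhammer_rec)
qed

lemma poch_p:
  assumes p: "p > 0"
  shows "of_nat p ^ n * pochhammer (t + of_nat j / of_nat p) n = (\<Prod>u<n. (of_nat (j + p * u) + of_nat p * (t::rat)))"
proof -
  have "of_nat p ^ n * pochhammer (t + of_nat j / of_nat p) n
        = (\<Prod>u<n. of_nat p) * (\<Prod>u<n. t + of_nat j / of_nat p + of_nat u)"
    by (simp add: pochhammer_prod atLeast0LessThan)
  also have "\<dots> = (\<Prod>u<n. of_nat p * (t + of_nat j / of_nat p + of_nat u))"
    by (simp add: prod.distrib)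
  also have "\<dots> = (\<Prod>u<n. (of_nat (j + p * u) + of_nat p * t))"
  proof (rule prod.cong)
    fix u assume "u \<in> {..<n}"
    have "(of_nat p :: rat) * (of_nat j / of_nat p) = of_nat j" using p by simp
    thus "of_nat p * (t + of_nat j / of_nat p + of_nat u) = of_nat (j + p * u) + of_nat p * t"
      by (simp add: distrib_left)
  qed simp
  finally show ?thesis .
qed

lemma Rfun_eq:
  assumes p: "p > 0" and M: "M0 p s \<ge> p - 1 + s" and t0: "t \<noteq> 0"
  shows "Rfun p s n t = poly (Apoly p s n) t / (\<Prod>k\<in>{1..n}. (t + of_nat k) ^ (p - 1 + s))"
proof -
  define S where "S = p - 1 + s"
  define a where "a = M0 p s - S"
  define P where "P = (\<Prod>k\<in>{1..n}. (t + of_nat k))"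
  define NN where "NN = (\<Prod>j\<in>{1..p-1}. \<Prod>u<n. (of_nat (j + p * u) + of_nat p * t))"
  have M0a: "M0 p s = a + S" using M by (simp add: a_def S_def)
  have pn: "(of_nat p :: rat) ^ (p * n) = of_nat p ^ n * (of_nat p ^ n) ^ (p - 1)"
  proof -
    have "p * n = n + n * (p - 1)" using p by (cases p) auto
    thus ?thesis by (simp add: power_add power_mult)
  qed
  have "(of_nat p ^ n) ^ (p - 1) * (\<Prod>j = 1..p - 1. pochhammer (t + of_nat j / of_nat p) n)
        = (\<Prod>j = 1..p - 1. of_nat p ^ n * pochhammer (t + of_nat j / of_nat p) n)"
    by (simp add: prod.distrib)
  also have "\<dots> = NN" unfolding NN_def using poch_p[OF p] by simp
  finally have pr: "(of_nat p ^ n) ^ (p - 1) * (\<Prod>j = 1..p - 1. pochhammer (t + of_nat j / of_nat p) n) = NN" .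
  have den: "pochhammer t (n + 1) ^ S = t ^ S * (\<Prod>k\<in>{1..n}. (t + of_nat k) ^ S)"
    using poch_shift[of t n] by (simp add: power_mult_distrib prod_power_distrib)
  have "Rfun p s n t = of_nat p ^ n * (fact n) ^ s * t ^ (a + S) * ((of_nat p ^ n) ^ (p - 1) *
          (\<Prod>j = 1..p - 1. pochhammer (t + of_nat j / of_nat p) n)) / (pochhammer t (n + 1)) ^ S"
    unfolding Rfun_def S_def[symmetric] M0a pn by (simp add: mult.assoc)
  also have "\<dots> = of_nat p ^ n * (fact n) ^ s * t ^ a * NN / (\<Prod>k\<in>{1..n}. (t + of_nat k) ^ S)"
    unfolding pr den using t0 by (simp add: power_add)
  also have "\<dots> = poly (Apoly p s n) t / (\<Prod>k\<in>{1..n}. (t + of_nat k) ^ S)"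
    unfolding poly_Apoly NN_def a_def S_def by simp
  finally show ?thesis unfolding S_def .
qed

lemma degree_Apoly: "degree (Apoly p s n) \<le> (M0 p s - (p - 1 + s)) + (p - 1) * n"
proof -
  let ?F = "\<Prod>j\<in>{1..p-1}. \<Prod>u<n. [:of_nat (j + p * u), of_nat p:] :: rat poly"
  have "degree ?F \<le> (\<Sum>j\<in>{1..p-1}. degree (\<Prod>u<n. [:of_nat (j + p * u), of_nat p:] :: rat poly))"
    using degree_prod_sum_le[of "{1..p-1}"] by (simp add: o_def)
  also have "\<dots> \<le> (\<Sum>j\<in>{1..p-1}. n)"
  proof (rule sum_mono)
    fix j
    have "degree (\<Prod>u<n. [:of_nat (j + p * u), of_nat p:] :: rat poly)
          \<le> (\<Sum>u<n. degree ([:of_nat (j + p * u), of_nat p:] :: rat poly))"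
      by (rule order_trans[OF degree_prod_sum_le[OF finite_lessThan]]) (simp add: o_def)
    also have "\<dots> \<le> (\<Sum>u<n. 1)" by (intro sum_mono) simp
    finally show "degree (\<Prod>u<n. [:of_nat (j + p * u), of_nat p:] :: rat poly) \<le> n" by simp
  qed
  also have "\<dots> = (p - 1) * n" by simp
  finally have dF: "degree ?F \<le> (p - 1) * n" .
  have "degree (Apoly p s n) \<le> degree ([:0, 1:] ^ (M0 p s - (p - 1 + s)) * ?F :: rat poly)"
    unfolding Apoly_def by (rule degree_smult_le)
  also have "\<dots> \<le> degree ([:0, 1:] ^ (M0 p s - (p - 1 + s)) :: rat poly) + degree ?F"
    by (rule degree_mult_le)
  also have "\<dots> \<le> (M0 p s - (p - 1 + s)) + (p - 1) * n"
    using dF by (simp add: degree_power_eq)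
  finally show ?thesis .
qed

lemma M0_bounds:
  assumes p: "prime p" and p5: "p \<ge> 5" and s: "s > 0" and n: "n > (p + s) ^ 4"
  shows "p - 1 + s \<le> M0 p s" "M0 p s < s * n"
proof -
  have p1: "p > 1" using p5 by simp
  have "p ^ N0 p s dvd p - 1 + s" unfolding N0_def by (rule multiplicity_dvd)
  hence pN: "p ^ N0 p s \<le> p - 1 + s" using s by (intro dvd_imp_le) auto
  have M0e: "M0 p s + 1 = p ^ 2 * p ^ N0 p s * s"
  proof -
    have "p ^ (2 + N0 p s) * s \<ge> 1" using p1 s by simp
    thus ?thesis unfolding M0_def by (simp add: power_add power2_eq_square)
  qed
  have "p ^ 2 * s \<le> p ^ 2 * p ^ N0 p s * s" using p1 by simp
  moreover have "p - 1 + s + 1 \<le> p ^ 2 * s"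
  proof -
    have "p ^ 2 * s = p * (p * s)" by (simp add: power2_eq_square)
    also have "p * (p * s) \<ge> 2 * (p * s)" using p5 by (intro mult_right_mono) auto
    finally have a: "p ^ 2 * s \<ge> 2 * (p * s)" .
    have "p * s \<ge> p" "p * s \<ge> s" using s p1 by auto
    moreover have "p - 1 + s + 1 = p + s" using p1 by simp
    ultimately show ?thesis using a by linarith
  qed
  ultimately show "p - 1 + s \<le> M0 p s" using M0e by linarith
  have "p ^ 2 * p ^ N0 p s \<le> p ^ 2 * (p + s)" using pN by (intro mult_left_mono) auto
  also have "\<dots> \<le> (p + s) ^ 2 * (p + s)" by (intro mult_right_mono power_mono) auto
  also have "\<dots> \<le> (p + s) ^ 4"
  proof -
    have "(p + s) ^ 2 * (p + s) = (p + s) ^ 3" by (simp add: numeral_3_eq_3 power2_eq_square)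
    also have "\<dots> \<le> (p + s) ^ 4" using p1 by (intro power_increasing) auto
    finally show ?thesis .
  qed
  finally have "p ^ 2 * p ^ N0 p s < n" using n by linarith
  hence "p ^ 2 * p ^ N0 p s * s < n * s" using s by simp
  hence "M0 p s + 1 < n * s" using M0e by linarith
  thus "M0 p s < s * n" by (simp add: mult.commute)
qed

lemma pf_coeff_eq:
  assumes p: "prime p" and p5: "p \<ge> 5" and s: "s > 0" and n: "n > (p + s) ^ 4"
    and i: "i \<in> {1..p - 1 + s}" and k: "k \<in> {1..n}"
  shows "pf_coeff p s n i k = Lf (Apoly p s n) {1..n} (p - 1 + s) k $ (p - 1 + s - i)"
proof -
  define S where "S = p - 1 + s"
  define A where "A = Apoly p s n"
  define r where "r i k = (if i \<in> {1..S} \<and> k \<in> {1..n} then Lf A {1..n} S k $ (S - i) else 0)" for i k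
  have S0: "S > 0" using s by (simp add: S_def)
  have p0: "p > 0" using p5 by simp
  note MB = M0_bounds[OF p p5 s n]
  have degA: "degree A < S * card {1..n}"
  proof -
    have "degree A \<le> (M0 p s - S) + (p - 1) * n" using degree_Apoly by (simp add: A_def S_def)
    also have "\<dots> < S * n" using MB unfolding S_def by (simp add: algebra_simps)
    finally show ?thesis by simp
  qed
  define P where "P r \<longleftrightarrow> (\<forall>i k. (i \<notin> {1..S} \<or> k \<notin> {1..n}) \<longrightarrow> r i k = 0) \<and>
      (\<forall>t::rat. (\<forall>k\<in>{0..n}. t \<noteq> - of_nat k) \<longrightarrow>
         Rfun p s n t = (\<Sum>i=1..S. \<Sum>k=1..n. r i k / (t + of_nat k) ^ i))" for r
  have Rf: "Rfun p s n t = (\<Sum>i=1..S. \<Sum>k=1..n. r i k / (t + of_nat k) ^ i)"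
    if t: "\<forall>k\<in>{0..n}. t \<noteq> - of_nat k" for t
  proof -
    have t0: "t \<noteq> 0" using t by auto
    have tk: "\<forall>k\<in>{1..n}. t + of_nat k \<noteq> 0"
    proof
      fix k assume k: "k \<in> {1..n}"
      show "t + of_nat k \<noteq> 0"
      proof
        assume "t + of_nat k = 0"
        hence "t = - of_nat k" by (simp add: eq_neg_iff_add_eq_0)
        thus False using t k by auto
      qed
    qed
    have "Rfun p s n t = poly A t / (\<Prod>k\<in>{1..n}. (t + of_nat k) ^ S)"
      using Rfun_eq[OF p0 MB(1) t0] by (simp add: A_def S_def)
    also have "\<dots> = (\<Sum>i=1..S. \<Sum>k\<in>{1..n}. Lf A {1..n} S k $ (S - i) / (t + of_nat k) ^ i)"
      by (rule pf_eval[OF _ S0 degA tk]) simp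
    also have "\<dots> = (\<Sum>i=1..S. \<Sum>k=1..n. r i k / (t + of_nat k) ^ i)"
      by (intro sum.cong) (auto simp: r_def)
    finally show ?thesis .
  qed
  have Pr: "P r" unfolding P_def using Rf by (auto simp: r_def)
  have uniq: "r' = r" if Pr': "P r'" for r'
  proof (intro ext)
    fix i k
    show "r' i k = r i k"
    proof (cases "i \<in> {1..S} \<and> k \<in> {1..n}")
      case False thus ?thesis using Pr Pr' unfolding P_def by auto
    next
      case True
      define Fin where "Fin = (\<lambda>k. - (of_nat k :: rat)) ` {0..n}"
      have "(\<lambda>i k. r' i k - r i k) i k = 0"
      proof (rule pf_unique[of "{1..n}" S Fin])
        show "finite Fin" by (simp add: Fin_def)
        show "\<forall>k\<in>{1..n}. - of_nat k \<in> Fin" by (auto simp: Fin_def)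
        show "\<forall>t. t \<notin> Fin \<longrightarrow> (\<Sum>i = 1..S. \<Sum>k\<in>{1..n}. (r' i k - r i k) / (t + of_nat k) ^ i) = 0"
        proof (intro allI impI)
          fix t assume t: "t \<notin> Fin"
          hence t': "\<forall>k\<in>{0..n}. t \<noteq> - of_nat k" by (auto simp: Fin_def)
          have "(\<Sum>i = 1..S. \<Sum>k\<in>{1..n}. (r' i k - r i k) / (t + of_nat k) ^ i)
              = (\<Sum>i = 1..S. \<Sum>k=1..n. r' i k / (t + of_nat k) ^ i) - (\<Sum>i = 1..S. \<Sum>k=1..n. r i k / (t + of_nat k) ^ i)"
            by (simp add: diff_divide_distrib sum_subtractf)
          also have "\<dots> = 0" using Pr' t' Rf[OF t'] unfolding P_def by simp
          finally show "(\<Sum>i = 1..S. \<Sum>k\<in>{1..n}. (r' i k - r i k) / (t + of_nat k) ^ i) = 0" .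
        qed
      qed (use True S0 in auto)
      thus ?thesis by simp
    qed
  qed
  have "pf_coeff p s n = r"
    unfolding pf_coeff_def S_def[symmetric]
    by (rule the_equality) (use Pr uniq in \<open>auto simp: P_def\<close>)
  thus ?thesis using i k by (simp add: r_def S_def A_def)
qed

definition lin :: "rat \<Rightarrow> rat \<Rightarrow> rat fps" where
  "lin a b = fps_const a + fps_const b * fps_X"

lemma fps_of_poly_lin: "fps_of_poly [:a, b:] = lin a b"
  by (simp add: lin_def fps_of_poly_pCons fps_of_poly_const mult.commute)

definition Iv :: "nat \<Rightarrow> nat \<Rightarrow> rat fps" where
  "Iv n k = (\<Prod>l\<in>{1..n}-{k}. inverse (lin (of_int (int l - int k)) 1))"

definition Nj :: "nat \<Rightarrow> nat \<Rightarrow> nat \<Rightarrow> nat \<Rightarrow> rat fps" where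
  "Nj p n k j = (\<Prod>u<n. lin (of_int (int j + int p * (int u - int k))) (of_nat p))"

lemma fps_inverse_prod:
  "inverse (\<Prod>x\<in>A. f x) = (\<Prod>x\<in>A. inverse (f x :: rat fps))"
  by (induction A rule: infinite_finite_induct) (simp_all add: fps_inverse_mult)

lemma shift_Apoly:
  "shiftp (- of_nat k) (Apoly p s n) = smult (of_nat (p ^ n * fact n ^ s))
     ([:- of_nat k, 1:] ^ (M0 p s - (p - 1 + s)) *
      (\<Prod>j\<in>{1..p-1}. \<Prod>u<n. [:of_int (int j + int p * (int u - int k)), of_nat p:]))"
proof -
  have "poly (shiftp (- of_nat k) (Apoly p s n)) x = poly (smult (of_nat (p ^ n * fact n ^ s))
     ([:- of_nat k, 1:] ^ (M0 p s - (p - 1 + s)) *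
      (\<Prod>j\<in>{1..p-1}. \<Prod>u<n. [:of_int (int j + int p * (int u - int k)), of_nat p:]))) x" for x
  proof -
    have "(\<Prod>j\<in>{1..p-1}. \<Prod>u<n. (of_nat (j + p * u) + of_nat p * (- of_nat k + x)))
        = (\<Prod>j\<in>{1..p-1}. \<Prod>u<n. poly [:of_int (int j + int p * (int u - int k)), of_nat p:] (x::rat))"
      by (intro prod.cong refl) (simp add: algebra_simps)
    thus ?thesis by (simp add: poly_Apoly poly_prod)
  qed
  thus ?thesis by (simp add: poly_eq_poly_eq_iff[symmetric] fun_eq_iff)
qed

lemma shift_Dk:
  "shiftp (- of_nat k) (Dk {1..n} S k) = (\<Prod>l\<in>{1..n}-{k}. [:of_int (int l - int k), 1:] ^ S)"
proof -
  have "poly (shiftp (- of_nat k) (Dk {1..n} S k)) x = poly (\<Prod>l\<in>{1..n}-{k}. [:of_int (int l - int k), 1:] ^ S) x" for x :: rat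
    by (simp add: poly_Dk poly_prod algebra_simps)
  thus ?thesis by (simp add: poly_eq_poly_eq_iff[symmetric] fun_eq_iff)
qed

lemma Lf_factor:
  assumes p: "p > 0"
  shows "Lf (Apoly p s n) {1..n} (p - 1 + s) k =
    fps_const (of_nat p ^ n) * lin (- of_nat k) 1 ^ (M0 p s - (p - 1 + s)) *
    (\<Prod>j\<in>{1..p-1}. Nj p n k j * Iv n k) * (fps_const (fact n) * Iv n k) ^ s"
proof -
  define a where "a = M0 p s - (p - 1 + s)"
  define NN where "NN = (\<Prod>j\<in>{1..p-1}. Nj p n k j)"
  have fA: "fps_of_poly (shiftp (- of_nat k) (Apoly p s n)) =
      fps_const (of_nat p ^ n) * fps_const (fact n) ^ s * lin (- of_nat k) 1 ^ a * NN"
    unfolding shift_Apoly fps_of_poly_smult fps_of_poly_mult fps_of_poly_power fps_of_poly_prod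
      fps_of_poly_lin NN_def Nj_def a_def
    by (simp add: fps_const_mult fps_const_power mult.assoc)
  have fD: "inverse (fps_of_poly (shiftp (- of_nat k) (Dk {1..n} (p - 1 + s) k))) = Iv n k ^ (p - 1 + s)"
    unfolding shift_Dk fps_of_poly_prod fps_of_poly_power fps_of_poly_lin fps_inverse_prod
      fps_inverse_power Iv_def
    by (simp add: prod_power_distrib)
  have pj: "(\<Prod>j\<in>{1..p-1}. Nj p n k j * Iv n k) = NN * Iv n k ^ (p - 1)"
    by (simp add: prod.distrib NN_def)
  show ?thesis
    unfolding Lf_def fA fD pj a_def[symmetric]
    by (simp add: power_mult_distrib power_add fps_const_power mult_ac)
qed

lemma mult_int_nat: "multiplicity (int p) (int x) = multiplicity p x"
proof (cases "x = 0 \<or> is_unit p")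
  case True
  moreover have "is_unit p \<Longrightarrow> is_unit (int p)" by simp
  ultimately show ?thesis by (auto simp: multiplicity_unit_left)
next
  case False
  hence x: "x \<noteq> 0" and pu: "\<not> is_unit p" by auto
  have pu': "\<not> is_unit (int p)" using pu by simp
  have x': "int x \<noteq> 0" using x by simp
  have "multiplicity p x \<le> multiplicity (int p) (int x)"
  proof (rule multiplicity_geI[OF x' pu'])
    have "p ^ multiplicity p x dvd x" by (rule multiplicity_dvd)
    thus "int p ^ multiplicity p x dvd int x" by (simp flip: of_nat_power)
  qed
  moreover have "multiplicity (int p) (int x) \<le> multiplicity p x"
  proof (rule multiplicity_geI[OF x pu])
    have "int p ^ multiplicity (int p) (int x) dvd int x" by (rule multiplicity_dvd)
    thus "p ^ multiplicity (int p) (int x) dvd x" by (simp flip: of_nat_power)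
  qed
  ultimately show ?thesis by simp
qed

lemma vq_nat: "prime q \<Longrightarrow> z \<noteq> 0 \<Longrightarrow> vq q (of_nat z) = int (multiplicity q z)"
  using vq_int[of q "int z"] by (simp add: mult_int_nat)

lemma mult_fact_rec:
  assumes p: "prime p"
  shows "multiplicity p (fact m) = m div p + multiplicity p (fact (m div p) :: nat)"
proof (induction m)
  case 0 thus ?case by simp
next
  case (Suc m)
  have p1: "p > 1" using prime_gt_1_nat[OF p] by simp
  have fs: "multiplicity p (fact (Suc m) :: nat) = multiplicity p (Suc m) + multiplicity p (fact m :: nat)"
  proof -
    have "(fact (Suc m) :: nat) = Suc m * fact m" by simp
    moreover have "multiplicity p (Suc m * fact m :: nat) = multiplicity p (Suc m) + multiplicity p (fact m :: nat)"
      by (rule prime_elem_multiplicity_mult_distrib) (use p in auto)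
    ultimately show ?thesis by simp
  qed
  show ?case
  proof (cases "p dvd Suc m")
    case False
    hence "multiplicity p (Suc m) = 0" by (rule not_dvd_imp_multiplicity_0)
    moreover have "Suc m div p = m div p" using False by (simp add: div_Suc dvd_eq_mod_eq_0)
    ultimately show ?thesis using fs Suc.IH by simp
  next
    case True
    define c where "c = Suc m div p"
    have c: "c = Suc (m div p)" using True unfolding c_def by (simp add: div_Suc)
    have mc: "Suc m = p * c" using True by (simp add: c_def)
    have c0: "c \<noteq> 0" using c by simp
    have "multiplicity p (p * c) = Suc (multiplicity p c)"
      by (rule multiplicity_times_same) (use p c0 in auto)
    hence m1: "multiplicity p (Suc m) = Suc (multiplicity p c)" using mc by simp
    have "(fact c :: nat) = c * fact (m div p)" using c by simp
    moreover have "multiplicity p (c * fact (m div p) :: nat) = multiplicity p c + multiplicity p (fact (m div p) :: nat)"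
      by (rule prime_elem_multiplicity_mult_distrib) (use p c0 in auto)
    ultimately have m2: "multiplicity p (fact c :: nat) = multiplicity p c + multiplicity p (fact (m div p) :: nat)"
      by simp
    have "multiplicity p (fact (Suc m) :: nat) = c + multiplicity p (fact c :: nat)"
      using fs Suc.IH m1 m2 c by simp
    thus ?thesis by (simp add: c_def)
  qed
qed

lemma legendre_bound:
  assumes p: "prime p"
  shows "(p - 1) * multiplicity p (fact m :: nat) \<le> m"
proof (induction m rule: less_induct)
  case (less m)
  have p1: "p > 1" using prime_gt_1_nat[OF p] by simp
  show ?case
  proof (cases "m = 0")
    case True thus ?thesis by simp
  next
    case False
    hence lt: "m div p < m" using p1 by simp
    have "(p - 1) * multiplicity p (fact m :: nat) = (p - 1) * (m div p) + (p - 1) * multiplicity p (fact (m div p) :: nat)"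
      by (subst mult_fact_rec[OF p]) (simp add: algebra_simps)
    also have "\<dots> \<le> (p - 1) * (m div p) + m div p" using less[OF lt] by simp
    also have "\<dots> = p * (m div p)" using p1 by (simp add: algebra_simps)
    also have "\<dots> \<le> m" by simp
    finally show ?thesis .
  qed
qed

lemma mult_fact_small:
  assumes p: "prime p" and m: "m < p"
  shows "multiplicity p (fact m :: nat) = 0"
  using p m by (simp add: not_dvd_imp_multiplicity_0 prime_dvd_fact_iff)

lemma prod_dist:
  assumes k: "k \<in> {1..n}"
  shows "(\<Prod>l\<in>{1..n}-{k}. \<bar>int l - int k\<bar>) = int (fact (k - 1) * fact (n - k))"
proof -
  have split: "{1..n}-{k} = {1..k-1} \<union> {k+1..n}" using k by auto
  have "(\<Prod>l\<in>{1..n}-{k}. \<bar>int l - int k\<bar>) = (\<Prod>l\<in>{1..k-1}. \<bar>int l - int k\<bar>) * (\<Prod>l\<in>{k+1..n}. \<bar>int l - int k\<bar>)"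
    unfolding split by (rule prod.union_disjoint) auto
  also have "(\<Prod>l\<in>{1..k-1}. \<bar>int l - int k\<bar>) = (\<Prod>i\<in>{1..k-1}. int i)"
    by (rule prod.reindex_bij_witness[of _ "\<lambda>i. k - i" "\<lambda>l. k - l"]) auto
  also have "\<dots> = int (fact (k - 1))" by (simp add: fact_prod)
  also have "(\<Prod>l\<in>{k+1..n}. \<bar>int l - int k\<bar>) = (\<Prod>i\<in>{1..n-k}. int i)"
    by (rule prod.reindex_bij_witness[of _ "\<lambda>i. i + k" "\<lambda>l. l - k"]) auto
  also have "\<dots> = int (fact (n - k))" by (simp add: fact_prod)
  finally show ?thesis by simp
qed

lemma fact_split_dvd:
  assumes k: "k \<in> {1..n}"
  shows "fact (k - 1) * fact (n - k) dvd (fact (n - 1) :: nat)"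
proof -
  have "fact (k - 1) * fact (n - 1 - (k - 1)) * (n - 1 choose (k - 1)) = (fact (n - 1) :: nat)"
    using k by (intro binomial_fact_lemma) auto
  moreover have "n - 1 - (k - 1) = n - k" using k by auto
  ultimately show ?thesis by (metis dvd_triv_left)
qed

lemma prod_abs_int: "\<bar>\<Prod>x\<in>A. f x\<bar> = (\<Prod>x\<in>A. \<bar>f x :: int\<bar>)"
  by (induction A rule: infinite_finite_induct) (simp_all add: abs_mult)

lemma mult_abs_int: "multiplicity r \<bar>x\<bar> = multiplicity r (x::int)"
  using multiplicity_normalize_right[of r x] by simp

definition Xk :: "nat \<Rightarrow> nat \<Rightarrow> nat \<Rightarrow> nat" where
  "Xk q n k = multiplicity q (fact (k - 1) * fact (n - k) :: nat)"

lemma sum_vq_dist: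
  assumes q: "prime q" and k: "k \<in> {1..n}"
  shows "(\<Sum>l\<in>{1..n}-{k}. vq q (of_int (int l - int k))) = int (Xk q n k)"
proof -
  have nz: "\<And>l. l \<in> {1..n}-{k} \<Longrightarrow> (of_int (int l - int k) :: rat) \<noteq> 0" by auto
  have "(\<Sum>l\<in>{1..n}-{k}. vq q (of_int (int l - int k))) = vq q (\<Prod>l\<in>{1..n}-{k}. of_int (int l - int k))"
    by (rule vq_prod[OF q, symmetric]) (use nz in auto)
  also have "(\<Prod>l\<in>{1..n}-{k}. of_int (int l - int k) :: rat) = of_int (\<Prod>l\<in>{1..n}-{k}. (int l - int k))"
    by simp
  also have "vq q \<dots> = int (multiplicity (int q) (\<Prod>l\<in>{1..n}-{k}. (int l - int k)))"
    by (rule vq_int[OF q]) auto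
  also have "multiplicity (int q) (\<Prod>l\<in>{1..n}-{k}. (int l - int k)) = multiplicity (int q) \<bar>\<Prod>l\<in>{1..n}-{k}. (int l - int k)\<bar>"
    by (rule mult_abs_int[symmetric])
  also have "\<bar>\<Prod>l\<in>{1..n}-{k}. (int l - int k)\<bar> = (\<Prod>l\<in>{1..n}-{k}. \<bar>int l - int k\<bar>)"
    by (rule prod_abs_int)
  also have "\<dots> = int (fact (k - 1) * fact (n - k))" by (rule prod_dist[OF k])
  finally show ?thesis using mult_int_nat[of q "fact (k - 1) * fact (n - k)"] by (simp add: Xk_def)
qed

lemma lin1: "lin c 1 = fps_const c + fps_X" by (simp add: lin_def)

lemma dlcm_nz: "dlcm n \<noteq> 0"
  by (simp add: dlcm_def Lcm_0_iff)

lemma dvd_dlcm: "d \<in> {1..n} \<Longrightarrow> d dvd dlcm n"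
  by (simp add: dlcm_def dvd_Lcm)

definition ee :: "nat \<Rightarrow> nat \<Rightarrow> int" where
  "ee q n = int (multiplicity q (dlcm n))"

lemma vq_dlcm: "prime q \<Longrightarrow> vq q (of_nat (dlcm n)) = ee q n"
  by (simp add: vq_nat dlcm_nz ee_def)

lemma dist_le_e:
  assumes q: "prime q" and k: "k \<in> {1..n}" and l: "l \<in> {1..n}-{k}"
  shows "vq q (of_int (int l - int k)) \<le> ee q n"
proof -
  define z where "z = int l - int k"
  have z0: "z \<noteq> 0" using l by (auto simp: z_def)
  have "vq q (of_int z) = int (multiplicity (int q) z)" using vq_int[OF q z0] .
  also have "multiplicity (int q) z = multiplicity (int q) (int (nat \<bar>z\<bar>))"
    using mult_abs_int[of "int q" z] by simp
  also have "\<dots> = multiplicity q (nat \<bar>z\<bar>)" by (rule mult_int_nat)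
  also have "\<dots> \<le> multiplicity q (dlcm n)"
  proof (rule dvd_imp_multiplicity_le)
    show "nat \<bar>z\<bar> dvd dlcm n" using k l z0 by (intro dvd_dlcm) (auto simp: z_def)
  qed (rule dlcm_nz)
  finally show ?thesis by (simp add: z_def ee_def)
qed

lemma ee_nonneg: "0 \<le> ee q n" by (simp add: ee_def)

lemma fgood_Iv:
  assumes q: "prime q" and k: "k \<in> {1..n}" and e: "0 \<le> e"
    and le: "\<And>l. l \<in> {1..n}-{k} \<Longrightarrow> vq q (of_int (int l - int k)) \<le> e"
  shows "fgood q (- int (Xk q n k)) e (Iv n k)"
proof -
  have "fgood q (\<Sum>l\<in>{1..n}-{k}. - vq q (of_int (int l - int k))) e (Iv n k)"
    unfolding Iv_def lin1
    by (rule fgood_prod[OF q e]) (use le in \<open>auto intro!: fgood_inv[OF q]\<close>)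
  moreover have "(\<Sum>l\<in>{1..n}-{k}. - vq q (of_int (int l - int k))) = - int (Xk q n k)"
    using sum_vq_dist[OF q k] by (simp add: sum_negf)
  ultimately show ?thesis by simp
qed

lemma fgood_T:
  assumes q: "prime q" and e: "0 \<le> e"
  shows "fgood q 0 e (lin (- of_nat k) 1 ^ a)"
proof -
  have "fgood q 0 e (lin (- of_nat k) 1)"
    unfolding lin_def
  proof (rule fgood_lin)
    show "vge q (- of_nat k) 0" using vge_nat[OF q, of k] by (simp add: vge_uminus[OF q])
    show "vge q 1 (0 - e)" using e by (simp add: vge_def)
  qed (rule e)
  thus ?thesis using fgood_power[OF q e, of 0 _ a] by simp
qed

lemma fgood_Nj:
  assumes q: "prime q" and e: "0 \<le> e"
  shows "fgood q 0 e (Nj p n k j)"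
proof -
  have "fgood q (\<Sum>u<n. 0) e (Nj p n k j)"
    unfolding Nj_def
  proof (rule fgood_prod[OF q e])
    fix u
    show "fgood q 0 e (lin (of_int (int j + int p * (int u - int k))) (of_nat p))"
      unfolding lin_def
    proof (rule fgood_lin)
      show "vge q (of_int (int j + int p * (int u - int k))) 0" by (rule vge_int[OF q])
      show "vge q (of_nat p) (0 - e)" by (rule vge_mono[OF vge_nat[OF q]]) (use e in simp)
    qed (rule e)
  qed simp
  thus ?thesis by simp
qed

lemma fgood_constv:
  assumes q: "prime q" and e: "0 \<le> e" and c: "c \<noteq> 0"
  shows "fgood q (vq q c) e (fps_const c)"
  by (rule fgood_const) (use e c in \<open>auto simp: vge_def\<close>)

lemma fgood_Lf:
  assumes q: "prime q" and e: "0 \<le> e" and p: "p > 0"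
    and h1: "fgood q B1 e (fps_const (of_nat p ^ n))"
    and h2: "fgood q B2 e (lin (- of_nat k) 1 ^ (M0 p s - (p - 1 + s)))"
    and h3: "\<And>j. j \<in> {1..p-1} \<Longrightarrow> fgood q B3 e (Nj p n k j * Iv n k)"
    and h4: "fgood q B4 e (fps_const (fact n) * Iv n k)"
  shows "fgood q (B1 + B2 + int (p - 1) * B3 + int s * B4) e (Lf (Apoly p s n) {1..n} (p - 1 + s) k)"
proof -
  have "fgood q (\<Sum>j\<in>{1..p-1}. B3) e (\<Prod>j\<in>{1..p-1}. Nj p n k j * Iv n k)"
    by (rule fgood_prod[OF q e]) (use h3 in auto)
  hence h3': "fgood q (int (p - 1) * B3) e (\<Prod>j\<in>{1..p-1}. Nj p n k j * Iv n k)" by simp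
  have h4': "fgood q (int s * B4) e ((fps_const (fact n) * Iv n k) ^ s)"
    by (rule fgood_power[OF q e h4])
  show ?thesis unfolding Lf_factor[OF p]
    by (intro fgood_mult[OF q] h1 h2 h3' h4')
qed

lemma good_p:
  assumes p: "prime p" and k: "k \<in> {1..n}"
  shows "fgood p 0 (ee p n) (Lf (Apoly p s n) {1..n} (p - 1 + s) k)"
proof -
  define e where "e = ee p n"
  define X where "X = Xk p n k"
  define F where "F = multiplicity p (fact n :: nat)"
  have e: "0 \<le> e" by (simp add: e_def ee_nonneg)
  have p0: "p > 0" using p by (simp add: prime_gt_0_nat)
  have Iv: "fgood p (- int X) e (Iv n k)"
    unfolding X_def e_def by (rule fgood_Iv[OF p k ee_nonneg dist_le_e[OF p k]])
  have h1: "fgood p (int n) e (fps_const (of_nat p ^ n))"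
  proof -
    have "vq p (of_nat p ^ n) = int n"
      using vq_nat[OF p, of "p ^ n"] p by (simp add: prime_gt_0_nat)
    thus ?thesis using fgood_constv[OF p e, of "of_nat p ^ n"] p0 by simp
  qed
  have h3: "fgood p (0 + - int X) e (Nj p n k j * Iv n k)" for j
    by (rule fgood_mult[OF p fgood_Nj[OF p e] Iv])
  have h4: "fgood p (int F + - int X) e (fps_const (fact n) * Iv n k)"
  proof -
    have "vq p (fact n) = int F" using vq_nat[OF p, of "fact n"] by (simp add: F_def)
    hence "fgood p (int F) e (fps_const (fact n))" using fgood_constv[OF p e, of "fact n"] by simp
    thus ?thesis by (rule fgood_mult[OF p _ Iv])
  qed
  have main: "fgood p (int n + 0 + int (p - 1) * (0 + - int X) + int s * (int F + - int X)) e
      (Lf (Apoly p s n) {1..n} (p - 1 + s) k)"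
    by (rule fgood_Lf[OF p e p0 h1 fgood_T[OF p e] h3 h4])
  have XF: "X \<le> multiplicity p (fact (n - 1) :: nat)"
    unfolding X_def Xk_def by (rule dvd_imp_multiplicity_le[OF fact_split_dvd[OF k]]) simp
  have F1: "multiplicity p (fact (n - 1) :: nat) \<le> F"
    unfolding F_def by (rule dvd_imp_multiplicity_le) (simp_all add: fact_dvd)
  have L: "(p - 1) * multiplicity p (fact (n - 1) :: nat) \<le> n - 1" by (rule legendre_bound[OF p])
  have "(p - 1) * X \<le> (p - 1) * multiplicity p (fact (n - 1) :: nat)"
    using XF by (rule mult_le_mono2)
  hence "(p - 1) * X \<le> n" using L by linarith
  hence a: "int (p - 1) * int X \<le> int n" by (simp flip: of_nat_mult)
  have "int X \<le> int F" using XF F1 by simp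
  hence b: "0 \<le> int s * (int F - int X)" by simp
  have "int n + 0 + int (p - 1) * (0 + - int X) + int s * (int F + - int X)
        = int n - int (p - 1) * int X + int s * (int F - int X)" by (simp add: algebra_simps)
  hence "0 \<le> int n + 0 + int (p - 1) * (0 + - int X) + int s * (int F + - int X)"
    using a b by linarith
  thus ?thesis using fgood_mono[OF main] unfolding e_def by simp
qed

lemma dvd_prod_diff:
  fixes f g :: "'a \<Rightarrow> int"
  assumes "\<And>u. u \<in> A \<Longrightarrow> m dvd f u - g u"
  shows "m dvd (\<Prod>u\<in>A. f u) - (\<Prod>u\<in>A. g u)"
  using assms
proof (induction A rule: infinite_finite_induct)
  case (insert a A)
  have "f a * prod f A - g a * prod g A = f a * (prod f A - prod g A) + (f a - g a) * prod g A"
    by (simp add: algebra_simps)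
  moreover have "m dvd f a * (prod f A - prod g A)" using insert by simp
  moreover have "m dvd (f a - g a) * prod g A" using insert by simp
  ultimately show ?case using insert by simp
qed simp_all

lemma AP_lemma:
  fixes x :: int
  assumes q: "prime q" and qp: "\<not> q dvd p" and nz: "(\<Prod>u<n. x + int p * int u) \<noteq> 0"
  shows "multiplicity q (fact n :: nat) \<le> multiplicity (int q) (\<Prod>u<n. x + int p * int u)"
proof -
  define E where "E = multiplicity q (fact n :: nat)"
  define m where "m = (int q) ^ E"
  define P where "P = (\<Prod>u<n. x + int p * int u)"
  have "coprime q p" using prime_imp_coprime[OF q qp] .
  hence "coprime (int q) (int p)" by simp
  hence cop: "coprime (int p) m" unfolding m_def by (simp add: coprime_commute)
  obtain u v where uv: "u * int p + v * m = 1"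
    using bezout_int[of "int p" m] cop by (auto simp: coprime_iff_gcd_eq_1)
  have "int p * u - 1 = m * (- v)" using uv by (simp add: algebra_simps)
  hence mdvd1: "m dvd int p * u - 1" by (rule dvdI)
  define A where "A = (\<Prod>w<n. u * x + int p * u * int w)"
  define B where "B = (\<Prod>w<n. u * x + int w)"
  have a: "m dvd A - B" unfolding A_def B_def
  proof (rule dvd_prod_diff)
    fix w assume "w \<in> {..<n}"
    have "u * x + int p * u * int w - (u * x + int w) = (int p * u - 1) * int w" by (simp add: algebra_simps)
    thus "m dvd u * x + int p * u * int w - (u * x + int w)" using mdvd1 by simp
  qed
  have b: "A = u ^ n * P"
  proof -
    have "A = (\<Prod>w<n. u * (x + int p * int w))" unfolding A_def
      by (intro prod.cong) (simp_all add: algebra_simps)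
    also have "\<dots> = (\<Prod>w<n. u) * P" by (simp add: prod.distrib P_def)
    finally show ?thesis by simp
  qed
  have c: "m dvd B"
  proof -
    have "fact n dvd pochhammer (u * x) n" by (rule fact_dvd_pochhammer)
    moreover have "pochhammer (u * x) n = B"
      by (simp add: pochhammer_prod atLeast0LessThan B_def)
    moreover have "m dvd fact n"
    proof -
      have "q ^ E dvd (fact n :: nat)" unfolding E_def by (rule multiplicity_dvd)
      hence "int (q ^ E) dvd int (fact n)" by (simp only: of_nat_dvd_iff)
      thus ?thesis by (simp add: m_def)
    qed
    ultimately show ?thesis using dvd_trans by blast
  qed
  have "A = (A - B) + B" by simp
  hence "m dvd A" using a c by (metis dvd_add)
  hence d: "m dvd int p ^ n * (u ^ n * P)" using b by simp
  have "int p * u - 1 dvd (int p * u) ^ n - 1" by (simp add: power_diff_1_eq)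
  hence "m dvd (int p * u) ^ n - 1" using mdvd1 by (rule dvd_trans[rotated])
  hence e: "m dvd ((int p * u) ^ n - 1) * P" by simp
  have "P = int p ^ n * (u ^ n * P) - ((int p * u) ^ n - 1) * P"
    by (simp add: algebra_simps power_mult_distrib)
  hence "m dvd P" using d e by (metis dvd_diff)
  thus ?thesis unfolding E_def[symmetric] m_def P_def
    using nz q by (intro multiplicity_geI) (auto simp: prime_elem_def)
qed

definition ej :: "nat \<Rightarrow> nat \<Rightarrow> nat \<Rightarrow> nat \<Rightarrow> rat" where
  "ej p n j l = (\<Prod>u<n. of_int (int j + int p * (int u - int l))) / (\<Prod>l'\<in>{1..n}-{l}. of_int (int l' - int l))"

lemma AP_nz:
  assumes p: "prime p" and j: "j \<in> {1..p-1}"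
  shows "int j + int p * (int u - int l) \<noteq> 0"
proof
  assume "int j + int p * (int u - int l) = 0"
  hence "int j = int p * (int l - int u)" by (simp add: algebra_simps)
  hence "int p dvd int j" by simp
  hence "p dvd j" by simp
  moreover have "0 < j" "j < p" using j p by (auto simp: prime_gt_1_nat)
  ultimately show False using dvd_imp_le by fastforce
qed

lemma vge_ej:
  assumes q: "prime q" and p: "prime p" and qp: "q \<noteq> p" and j: "j \<in> {1..p-1}" and l: "l \<in> {1..n}"
  shows "vge q (ej p n j l) 0"
proof -
  define Z where "Z = (\<Prod>u<n. int j + int p * (int u - int l))"
  have Z0: "Z \<noteq> 0" unfolding Z_def using AP_nz[OF p j] by simp
  have Zeq: "Z = (\<Prod>u<n. (int j - int p * int l) + int p * int u)"
    unfolding Z_def by (intro prod.cong) (simp_all add: algebra_simps)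
  have qndvd: "\<not> q dvd p" using q p qp by (metis primes_dvd_imp_eq)
  have vZ: "int (multiplicity q (fact n :: nat)) \<le> vq q (of_int Z)"
    using AP_lemma[OF q qndvd, of "int j - int p * int l" n] Z0 Zeq vq_int[OF q Z0] by simp
  have D0: "(\<Prod>l'\<in>{1..n}-{l}. of_int (int l' - int l) :: rat) \<noteq> 0" by simp
  have vD: "vq q (\<Prod>l'\<in>{1..n}-{l}. of_int (int l' - int l)) = int (Xk q n l)"
    using sum_vq_dist[OF q l] vq_prod[OF q, of "{1..n}-{l}" "\<lambda>l'. of_int (int l' - int l)"] by simp
  have "Xk q n l \<le> multiplicity q (fact (n - 1) :: nat)"
    unfolding Xk_def by (rule dvd_imp_multiplicity_le[OF fact_split_dvd[OF l]]) simp
  also have "\<dots> \<le> multiplicity q (fact n :: nat)"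
    by (rule dvd_imp_multiplicity_le) (simp_all add: fact_dvd)
  finally have XF: "Xk q n l \<le> multiplicity q (fact n :: nat)" .
  have "ej p n j l = of_int Z / (\<Prod>l'\<in>{1..n}-{l}. of_int (int l' - int l))"
    by (simp add: ej_def Z_def)
  moreover have "vq q (of_int Z / (\<Prod>l'\<in>{1..n}-{l}. of_int (int l' - int l))) = vq q (of_int Z) - int (Xk q n l)"
    using vq_divide[OF q _ D0, of "of_int Z"] Z0 vD by simp
  ultimately show ?thesis using vZ XF by (simp add: vge_def)
qed

definition WP :: "nat \<Rightarrow> nat \<Rightarrow> rat poly" where
  "WP n k = (\<Prod>l\<in>{1..n}-{k}. [:of_int (int l - int k), 1:])"

definition WlP :: "nat \<Rightarrow> nat \<Rightarrow> nat \<Rightarrow> rat poly" where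
  "WlP n k l = (\<Prod>l'\<in>{1..n}-{k}-{l}. [:of_int (int l' - int k), 1:])"

definition NP :: "nat \<Rightarrow> nat \<Rightarrow> nat \<Rightarrow> nat \<Rightarrow> rat poly" where
  "NP p n k j = (\<Prod>u<n. [:of_int (int j + int p * (int u - int k)), of_nat p:])"

definition RP :: "nat \<Rightarrow> nat \<Rightarrow> nat \<Rightarrow> nat \<Rightarrow> rat poly" where
  "RP p n k j = [:ej p n j k, of_nat p ^ n:] * WP n k +
     (\<Sum>l\<in>{1..n}-{k}. smult (ej p n j l) ([:0, 1:] * WlP n k l))"

lemma degree_lin_le: "degree [:a, b:] \<le> 1" by simp

lemma degree_WP: "degree (WP n k) = card ({1..n}-{k})"
  unfolding WP_def by (subst degree_prod_eq_sum_degree) auto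

lemma lead_WP: "lead_coeff (WP n k) = 1"
  unfolding WP_def by (simp add: lead_coeff_prod)

lemma degree_WlP: "degree (WlP n k l) = card ({1..n}-{k}-{l})"
  unfolding WlP_def by (subst degree_prod_eq_sum_degree) auto

lemma NP_degree_coeff:
  assumes p: "p > 0"
  shows "degree (NP p n k j) = n" "coeff (NP p n k j) n = of_nat p ^ n"
proof -
  show d: "degree (NP p n k j) = n"
    unfolding NP_def using p by (subst degree_prod_eq_sum_degree) auto
  have "lead_coeff (NP p n k j) = (\<Prod>u<n. lead_coeff [:of_int (int j + int p * (int u - int k)), of_nat p:])"
    unfolding NP_def by (rule lead_coeff_prod)
  also have "\<dots> = (\<Prod>u<n. (of_nat p :: rat))" using p by (intro prod.cong) auto
  also have "\<dots> = of_nat p ^ n" by simp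
  finally have "lead_coeff (NP p n k j) = of_nat p ^ n" .
  thus "coeff (NP p n k j) n = of_nat p ^ n" using d by simp
qed

lemma RP_degree_coeff:
  assumes p: "p > 0" and k: "k \<in> {1..n}"
  shows "degree (RP p n k j) \<le> n" "coeff (RP p n k j) n = of_nat p ^ n"
proof -
  have cK: "card ({1..n}-{k}) = n - 1" using k by simp
  have n1: "n \<ge> 1" using k by simp
  define F where "F = [:ej p n j k, of_nat p ^ n:] * WP n k"
  define G where "G = (\<Sum>l\<in>{1..n}-{k}. smult (ej p n j l) ([:0, 1:] * WlP n k l))"
  have RPe: "RP p n k j = F + G" by (simp add: RP_def F_def G_def)
  have pn: "(of_nat p ^ n :: rat) \<noteq> 0" using p by simp
  have dF: "degree F = n"
  proof -
    have "degree F = degree [:ej p n j k, of_nat p ^ n:] + degree (WP n k)"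
      unfolding F_def by (rule degree_mult_eq) (use pn in \<open>auto simp: WP_def\<close>)
    thus ?thesis using pn degree_WP[of n k] cK n1 by simp
  qed
  have lF: "lead_coeff F = of_nat p ^ n"
  proof -
    have "lead_coeff [:ej p n j k, of_nat p ^ n:] = (of_nat p ^ n :: rat)" using pn p by simp
    thus ?thesis unfolding F_def lead_coeff_mult lead_WP by simp
  qed
  have dG: "degree G \<le> n - 1"
    unfolding G_def
  proof (rule degree_sum_le)
    fix l assume l: "l \<in> {1..n}-{k}"
    have "degree (smult (ej p n j l) ([:0, 1:] * WlP n k l)) \<le> degree ([:0, 1:] * WlP n k l)"
      by (rule degree_smult_le)
    also have "\<dots> \<le> degree ([:0, 1:] :: rat poly) + degree (WlP n k l)" by (rule degree_mult_le)
    also have "\<dots> = 1 + card ({1..n}-{k}-{l})" by (simp add: degree_WlP)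
    also have "\<dots> = n - 1"
    proof -
      have "card ({1..n}-{k}-{l}) = card ({1..n}-{k}) - 1" using l by (intro card_Diff_singleton) auto
      moreover have "card ({1..n}-{k}) \<ge> 1"
      proof -
        have "{k, l} \<subseteq> {1..n}" using k l by auto
        hence "card {k, l} \<le> card {1..n}" by (intro card_mono) auto
        thus ?thesis using l cK by auto
      qed
      ultimately show ?thesis using cK by linarith
    qed
    finally show "degree (smult (ej p n j l) ([:0, 1:] * WlP n k l)) \<le> n - 1" .
  qed simp
  show "degree (RP p n k j) \<le> n" unfolding RPe
    using degree_add_le[of F n G] dF dG by simp
  have "coeff G n = 0" using dG n1 by (intro coeff_eq_0) simp
  thus "coeff (RP p n k j) n = of_nat p ^ n" unfolding RPe using dF lF by simp
qed

lemma ej_mult: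
  "ej p n j l * (\<Prod>l'\<in>{1..n}-{l}. (of_nat l' - of_nat l :: rat)) = (\<Prod>u<n. of_int (int j + int p * (int u - int l)))"
proof -
  have "(\<Prod>l'\<in>{1..n}-{l}. (of_nat l' - of_nat l :: rat)) \<noteq> 0" by simp
  thus ?thesis unfolding ej_def by simp
qed

lemma NP_eq_RP:
  assumes p: "p > 0" and k: "k \<in> {1..n}"
  shows "NP p n k j = RP p n k j"
proof (rule poly_eqI_degree_lead_coeff[where n = n and A = "(\<lambda>l0. of_nat k - of_nat l0) ` {1..n}"])
  show "coeff (NP p n k j) n = coeff (RP p n k j) n"
    using NP_degree_coeff(2)[OF p] RP_degree_coeff(2)[OF p k] by simp
  have "inj_on (\<lambda>l0. (of_nat k - of_nat l0 :: rat)) {1..n}" by (intro inj_onI) simp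
  thus "n \<le> card ((\<lambda>l0. (of_nat k - of_nat l0 :: rat)) ` {1..n})" by (simp add: card_image)
  show "degree (NP p n k j) \<le> n" using NP_degree_coeff(1)[OF p] by simp
  show "degree (RP p n k j) \<le> n" using RP_degree_coeff(1)[OF p k] by simp
  fix z assume "z \<in> (\<lambda>l0. (of_nat k - of_nat l0 :: rat)) ` {1..n}"
  then obtain l0 where l0: "l0 \<in> {1..n}" and z: "z = of_nat k - of_nat l0" by blast
  have pNP: "poly (NP p n k j) z = (\<Prod>u<n. of_int (int j + int p * (int u - int l0)))"
    unfolding NP_def poly_prod z by (intro prod.cong) (simp_all add: algebra_simps)
  have pWP: "poly (WP n k) z = (\<Prod>l\<in>{1..n}-{k}. (of_nat l - of_nat l0))"
    unfolding WP_def poly_prod z by (intro prod.cong) (simp_all add: algebra_simps)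
  have pWlP: "poly (WlP n k l) z = (\<Prod>l'\<in>{1..n}-{k}-{l}. (of_nat l' - of_nat l0))" for l
    unfolding WlP_def poly_prod z by (intro prod.cong) (simp_all add: algebra_simps)
  have pRP: "poly (RP p n k j) z = (ej p n j k + of_nat p ^ n * z) * poly (WP n k) z +
      (\<Sum>l\<in>{1..n}-{k}. ej p n j l * (z * poly (WlP n k l) z))"
    by (simp add: RP_def poly_sum algebra_simps)
  show "poly (NP p n k j) z = poly (RP p n k j) z"
  proof (cases "l0 = k")
    case True
    hence z0: "z = 0" using z by simp
    have "poly (RP p n k j) z = ej p n j k * (\<Prod>l\<in>{1..n}-{k}. (of_nat l - of_nat k))"
      unfolding pRP pWP using z0 True by simp
    also have "\<dots> = poly (NP p n k j) z" unfolding pNP True by (rule ej_mult)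
    finally show ?thesis by simp
  next
    case False
    have l0K: "l0 \<in> {1..n}-{k}" using l0 False by simp
    have W0: "poly (WP n k) z = 0" unfolding pWP
      by (rule prod_zero[OF _ bexI[OF _ l0K]]) simp_all
    have "(\<Sum>l\<in>{1..n}-{k}. ej p n j l * (z * poly (WlP n k l) z))
        = ej p n j l0 * (z * poly (WlP n k l0) z) + (\<Sum>l\<in>{1..n}-{k}-{l0}. ej p n j l * (z * poly (WlP n k l) z))"
      using l0K by (subst sum.remove) auto
    also have "(\<Sum>l\<in>{1..n}-{k}-{l0}. ej p n j l * (z * poly (WlP n k l) z)) = 0"
    proof (rule sum.neutral, intro ballI)
      fix l assume l: "l \<in> {1..n}-{k}-{l0}"
      have "poly (WlP n k l) z = 0" unfolding pWlP
        by (rule prod_zero) (use l l0K in auto)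
      thus "ej p n j l * (z * poly (WlP n k l) z) = 0" by simp
    qed
    also have "z * poly (WlP n k l0) z = (\<Prod>l'\<in>{1..n}-{l0}. (of_nat l' - of_nat l0))"
    proof -
      have "{1..n}-{l0} = insert k ({1..n}-{k}-{l0})" using k False by auto
      hence "(\<Prod>l'\<in>{1..n}-{l0}. (of_nat l' - of_nat l0 :: rat))
           = (of_nat k - of_nat l0) * (\<Prod>l'\<in>{1..n}-{k}-{l0}. (of_nat l' - of_nat l0))"
        by (simp add: prod.insert)
      thus ?thesis unfolding pWlP using z by simp
    qed
    finally have "poly (RP p n k j) z = ej p n j l0 * (\<Prod>l'\<in>{1..n}-{l0}. (of_nat l' - of_nat l0))"
      unfolding pRP W0 by simp
    also have "\<dots> = poly (NP p n k j) z" unfolding pNP by (rule ej_mult)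
    finally show ?thesis by simp
  qed
qed

lemma lin01: "lin 0 1 = fps_X" by (simp add: lin_def)

lemma Nj_Iv_lagrange:
  assumes p: "p > 0" and k: "k \<in> {1..n}"
  shows "Nj p n k j * Iv n k = lin (ej p n j k) (of_nat p ^ n) +
    (\<Sum>l\<in>{1..n}-{k}. fps_const (ej p n j l) * (fps_X * inverse (lin (of_int (int l - int k)) 1)))"
    (is "_ = ?R")
proof -
  define W where "W = fps_of_poly (WP n k)"
  have W: "W = (\<Prod>l\<in>{1..n}-{k}. lin (of_int (int l - int k)) 1)"
    unfolding W_def WP_def fps_of_poly_prod fps_of_poly_lin ..
  have IvW: "Iv n k = inverse W" unfolding W Iv_def fps_inverse_prod ..
  have W0: "W $ 0 \<noteq> 0"
  proof -
    have "W $ 0 = poly (WP n k) 0" by (simp add: W_def poly_0_coeff_0)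
    also have "\<dots> = (\<Prod>l\<in>{1..n}-{k}. of_int (int l - int k))" by (simp add: WP_def poly_prod)
    finally show ?thesis by simp
  qed
  have NjP: "Nj p n k j = fps_of_poly (NP p n k j)"
    unfolding NP_def Nj_def fps_of_poly_prod fps_of_poly_lin ..
  have WlW: "inverse (lin (of_int (int l - int k)) 1) * W = fps_of_poly (WlP n k l)" if l: "l \<in> {1..n}-{k}" for l
  proof -
    have "W = lin (of_int (int l - int k)) 1 * fps_of_poly (WlP n k l)"
      unfolding W WlP_def fps_of_poly_prod fps_of_poly_lin using l by (subst prod.remove) auto
    moreover have "lin (of_int (int l - int k)) 1 $ 0 \<noteq> 0" using l by (simp add: lin_def)
    ultimately show ?thesis by (simp add: mult.assoc[symmetric] inverse_mult_eq_1)
  qed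
  have RW: "?R * W = fps_of_poly (RP p n k j)"
  proof -
    have "?R * W = lin (ej p n j k) (of_nat p ^ n) * W +
      (\<Sum>l\<in>{1..n}-{k}. fps_const (ej p n j l) * (fps_X * (inverse (lin (of_int (int l - int k)) 1) * W)))"
      by (simp add: distrib_right sum_distrib_right mult.assoc)
    also have "\<dots> = lin (ej p n j k) (of_nat p ^ n) * W +
      (\<Sum>l\<in>{1..n}-{k}. fps_const (ej p n j l) * (fps_X * fps_of_poly (WlP n k l)))"
      using WlW by simp
    also have "\<dots> = fps_of_poly (RP p n k j)"
      unfolding RP_def W_def
      by (simp only: fps_of_poly_add fps_of_poly_mult fps_of_poly_sum fps_of_poly_smult fps_of_poly_lin
          fps_of_poly_fps_X lin01)
    finally show ?thesis .
  qed
  have "Nj p n k j * Iv n k = fps_of_poly (RP p n k j) * inverse W"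
    unfolding NjP IvW NP_eq_RP[OF p k] ..
  also have "\<dots> = ?R" unfolding RW[symmetric] using W0
    by (simp add: mult.assoc inverse_mult_eq_1')
  finally show ?thesis .
qed

lemma good_q:
  assumes q: "prime q" and p: "prime p" and qp: "q \<noteq> p" and k: "k \<in> {1..n}"
  shows "fgood q 0 (ee q n) (Lf (Apoly p s n) {1..n} (p - 1 + s) k)"
proof -
  define e where "e = ee q n"
  define X where "X = Xk q n k"
  define F where "F = multiplicity q (fact n :: nat)"
  have e: "0 \<le> e" by (simp add: e_def ee_nonneg)
  have p0: "p > 0" using p by (simp add: prime_gt_0_nat)
  have Iv: "fgood q (- int X) e (Iv n k)"
    unfolding X_def e_def by (rule fgood_Iv[OF q k ee_nonneg dist_le_e[OF q k]])
  have h1: "fgood q 0 e (fps_const (of_nat p ^ n))"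
    by (rule fgood_const) (use vge_nat[OF q, of "p ^ n"] e in simp_all)
  have h3: "fgood q 0 e (Nj p n k j * Iv n k)" if j: "j \<in> {1..p-1}" for j
    unfolding Nj_Iv_lagrange[OF p0 k]
  proof (rule fgood_add[OF q, of 0 e, simplified])
    show "fgood q 0 e (lin (ej p n j k) (of_nat p ^ n))" unfolding lin_def
    proof (rule fgood_lin)
      show "vge q (ej p n j k) 0" by (rule vge_ej[OF q p qp j k])
      show "vge q (of_nat p ^ n) (0 - e)" using vge_nat[OF q, of "p ^ n"] e
        by (auto intro: vge_mono)
    qed (rule e)
    show "fgood q 0 e (\<Sum>l\<in>{1..n}-{k}. fps_const (ej p n j l) * (fps_X * inverse (lin (of_int (int l - int k)) 1)))"
    proof (rule fgood_sum[OF q])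
      fix l assume l: "l \<in> {1..n}-{k}"
      have c1: "fgood q 0 e (fps_const (ej p n j l))"
        by (rule fgood_const) (use vge_ej[OF q p qp j] l e in auto)
      have c2: "fgood q 0 e (fps_X * inverse (lin (of_int (int l - int k)) 1))"
        unfolding lin1 e_def
        by (rule fgood_Xinv[OF q _ dist_le_e[OF q k l]]) (use l in auto)
      show "fgood q 0 e (fps_const (ej p n j l) * (fps_X * inverse (lin (of_int (int l - int k)) 1)))"
        using fgood_mult[OF q c1 c2] by simp
    qed
  qed
  have h4: "fgood q 0 e (fps_const (fact n) * Iv n k)"
  proof -
    have "vq q (fact n) = int F" using vq_nat[OF q, of "fact n"] by (simp add: F_def)
    hence "fgood q (int F) e (fps_const (fact n))" using fgood_constv[OF q e, of "fact n"] by simp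
    hence fg: "fgood q (int F + - int X) e (fps_const (fact n) * Iv n k)" by (rule fgood_mult[OF q _ Iv])
    have "X \<le> F"
    proof -
      have "X \<le> multiplicity q (fact (n - 1) :: nat)"
        unfolding X_def Xk_def by (rule dvd_imp_multiplicity_le[OF fact_split_dvd[OF k]]) simp
      also have "\<dots> \<le> F"
        unfolding F_def by (rule dvd_imp_multiplicity_le) (simp_all add: fact_dvd)
      finally show ?thesis .
    qed
    hence "0 \<le> int F + - int X" by simp
    thus ?thesis by (rule fgood_mono[OF fg _ order_refl])
  qed
  have "fgood q (0 + 0 + int (p - 1) * 0 + int s * 0) e (Lf (Apoly p s n) {1..n} (p - 1 + s) k)"
    by (rule fgood_Lf[OF q e p0 h1 fgood_T[OF q e] h3 h4])
  thus ?thesis by (simp add: e_def)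
qed

lemma div_plus1_dvd:
  fixes x q :: int
  assumes q: "q > 0" and d: "q dvd x + 1"
  shows "(x + 1) div q = x div q + 1"
  using q d by (smt (verit, ccfv_SIG) div_add_self1 mod_eq_0_iff_dvd verit_le_mono_div_int)

lemma div_plus1_ndvd:
  fixes x q :: int
  assumes q: "q > 0" and nd: "\<not> q dvd x + 1"
  shows "(x + 1) div q = x div q"
proof -
  have "q \<noteq> 1" using nd by auto
  hence q2: "q \<ge> 2" using q by linarith
  have "x mod q + 1 \<noteq> q"
  proof
    assume "x mod q + 1 = q"
    hence "x + 1 = q * (x div q + 1)" by (metis add.assoc distrib_left mult.right_neutral mult_div_mod_eq)
    thus False using nd by (metis dvd_triv_left)
  qed
  moreover have "0 \<le> x mod q" "x mod q < q" using q by auto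
  ultimately have a: "(x mod q + 1) div q = 0" by (intro div_pos_pos_trivial) auto
  have b: "1 div q = 0" "1 mod q = 1" using q2 by auto
  show ?thesis using div_add1_eq[of x 1 q] a b by simp
qed

lemma div_plus1_int:
  fixes x q :: int
  assumes q: "q > 0"
  shows "(x + 1) div q = x div q + (if q dvd x + 1 then 1 else 0)"
  using div_plus1_dvd[OF q] div_plus1_ndvd[OF q] by auto

lemma count_dvd:
  fixes a q :: int
  assumes q: "q > 0"
  shows "(\<Sum>j=1..m. if q dvd a + int j then 1 else 0 :: int) = (a + int m) div q - a div q"
proof (induction m)
  case 0 thus ?case by simp
next
  case (Suc m)
  have e1: "(\<Sum>j=1..Suc m. if q dvd a + int j then 1 else 0 :: int) =
        (\<Sum>j=1..m. if q dvd a + int j then 1 else 0) + (if q dvd a + int (Suc m) then 1 else 0)"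
    by simp
  have e2: "a + int (Suc m) = a + int m + 1" by simp
  have "(\<Sum>j=1..Suc m. if q dvd a + int j then 1 else 0 :: int) =
        (\<Sum>j=1..m. if q dvd a + int j then 1 else 0) + (if q dvd a + int m + 1 then 1 else 0)"
    using e1 unfolding e2 .
  also have "\<dots> = (a + int m + 1) div q - a div q"
    using Suc div_plus1_int[OF q, of "a + int m"] by simp
  finally show ?case unfolding e2 .
qed

definition Gq :: "nat \<Rightarrow> nat \<Rightarrow> int \<Rightarrow> int" where
  "Gq p q c = (int p * c) div int q - c div int q"

lemma count_block:
  assumes q: "prime q" and qp: "\<not> q dvd p" and p: "p \<ge> 1"
  shows "(\<Sum>j\<in>{1..p-1}. if int q dvd int p * c + int j then 1 else 0 :: int) = Gq p q (c + 1) - Gq p q c"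
proof -
  have q0: "int q > 0" using q by (simp add: prime_gt_0_nat)
  have "(\<Sum>j=1..p. if int q dvd int p * c + int j then 1 else 0 :: int)
      = (\<Sum>j\<in>{1..p-1}. if int q dvd int p * c + int j then 1 else 0) + (if int q dvd int p * c + int p then 1 else 0)"
  proof -
    have "{1..p} = insert p {1..p-1}" using p by auto
    moreover have "(\<Sum>j\<in>insert p {1..p-1}. if int q dvd int p * c + int j then 1 else 0 :: int)
      = (if int q dvd int p * c + int p then 1 else 0) + (\<Sum>j\<in>{1..p-1}. if int q dvd int p * c + int j then 1 else 0)"
      by (rule sum.insert) auto
    ultimately show ?thesis by (simp only: add.commute)
  qed
  moreover have "(\<Sum>j=1..p. if int q dvd int p * c + int j then 1 else 0 :: int) = (int p * c + int p) div int q - (int p * c) div int q"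
    by (rule count_dvd[OF q0])
  moreover have "(int q dvd int p * c + int p) = (int q dvd c + 1)"
  proof -
    have "int p * c + int p = int p * (c + 1)" by (simp add: algebra_simps)
    moreover have "int q dvd int p * (c + 1) \<longleftrightarrow> int q dvd int p \<or> int q dvd c + 1"
      using q by (simp add: prime_dvd_mult_iff)
    moreover have "\<not> int q dvd int p" using qp by simp
    ultimately show ?thesis by simp
  qed
  moreover have "(if int q dvd c + 1 then 1 else 0) = (c + 1) div int q - c div int q"
    using div_plus1_int[OF q0, of c] by simp
  ultimately show ?thesis unfolding Gq_def by (simp add: algebra_simps)
qed

lemma telescope_G:
  "(\<Sum>u<n. Gq p q (int u - int k + 1) - Gq p q (int u - int k)) = Gq p q (int n - int k) - Gq p q (- int k)"
proof -
  have "(\<Sum>u<n. Gq p q (int u - int k + 1) - Gq p q (int u - int k))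
      = (\<Sum>u<n. (\<lambda>i. Gq p q (int i - int k)) (Suc u) - (\<lambda>i. Gq p q (int i - int k)) u)"
    by (intro sum.cong) (simp_all add: algebra_simps)
  also have "\<dots> = Gq p q (int n - int k) - Gq p q (- int k)" by (subst sum_lessThan_telescope) simp
  finally show ?thesis .
qed

lemma div_lt2: "(q::int) > 0 \<Longrightarrow> x < 2 * q \<Longrightarrow> x div q \<le> 1"
proof -
  assume q: "q > 0" and x: "x < 2 * q"
  have "x div q \<le> (q - 1 + 1 * q) div q" by (rule zdiv_mono1) (use x q in auto)
  also have "\<dots> = 1 + (q - 1) div q" using q by (subst div_mult_self1) auto
  also have "(q - 1) div q = 0" using q by (intro div_pos_pos_trivial) auto
  finally show ?thesis by simp
qed

lemma div_sum_ge:
  fixes a b q :: int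
  assumes q: "q > 0"
  shows "a div q + b div q \<le> (a + b) div q"
proof -
  have "0 \<le> (a mod q + b mod q) div q" using q by (simp add: pos_imp_zdiv_nonneg_iff)
  thus ?thesis using div_add1_eq[of a b q] by simp
qed

lemma div_sum_le:
  fixes a b q :: int
  assumes q: "q > 0"
  shows "(a + b) div q \<le> a div q + b div q + 1"
proof -
  have "a mod q < q" "b mod q < q" using q by auto
  hence "a mod q + b mod q < 2 * q" by simp
  hence "(a mod q + b mod q) div q \<le> 1" using q by (intro div_lt2) auto
  thus ?thesis using div_add1_eq[of a b q] by simp
qed

lemma vq_le1:
  assumes q: "prime q" and z: "z \<noteq> 0" and zb: "\<bar>z\<bar> < int q ^ 2"
  shows "vq q (of_int z) \<le> 1"
proof (rule ccontr)
  assume "\<not> vq q (of_int z) \<le> 1"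
  hence "2 \<le> multiplicity (int q) z" using vq_int[OF q z] by simp
  hence "int q ^ 2 dvd z" by (rule multiplicity_dvd')
  hence "\<bar>int q ^ 2\<bar> \<le> \<bar>z\<bar>" using z by (rule dvd_imp_le_int[rotated])
  thus False using zb by simp
qed

lemma vq_ge1:
  assumes q: "prime q" and z: "z \<noteq> 0" and d: "int q dvd z"
  shows "1 \<le> vq q (of_int z)"
proof -
  have "1 \<le> multiplicity (int q) z"
    using d z q by (intro multiplicity_geI) (auto simp: prime_elem_def)
  thus ?thesis using vq_int[OF q z] by simp
qed

lemma fgood_Lf':
  assumes q: "prime q" and e: "0 \<le> e" and p: "p > 0"
    and h1: "fgood q B1 e (fps_const (of_nat p ^ n))"
    and h2: "fgood q B2 e (lin (- of_nat k) 1 ^ (M0 p s - (p - 1 + s)))"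
    and h3: "\<And>j. j \<in> {1..p-1} \<Longrightarrow> fgood q (B3 j) e (Nj p n k j * Iv n k)"
    and h4: "fgood q B4 e (fps_const (fact n) * Iv n k)"
  shows "fgood q (B1 + B2 + (\<Sum>j\<in>{1..p-1}. B3 j) + int s * B4) e (Lf (Apoly p s n) {1..n} (p - 1 + s) k)"
proof -
  have h3': "fgood q (\<Sum>j\<in>{1..p-1}. B3 j) e (\<Prod>j\<in>{1..p-1}. Nj p n k j * Iv n k)"
    by (rule fgood_prod[OF q e]) (use h3 in auto)
  have h4': "fgood q (int s * B4) e ((fps_const (fact n) * Iv n k) ^ s)"
    by (rule fgood_power[OF q e h4])
  show ?thesis unfolding Lf_factor[OF p]
    by (intro fgood_mult[OF q] h1 h2 h3' h4')
qed

lemma aj_bound: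
  assumes j: "j \<in> {1..p-1}" and u: "u < n" and k: "k \<in> {1..n}"
  shows "\<bar>int j + int p * (int u - int k)\<bar> < int p * int n"
proof -
  have j1: "1 \<le> int j" "int j \<le> int p - 1" using j by auto
  have "int u - int k \<le> int n - 2" using u k by auto
  hence up: "int p * (int u - int k) \<le> int p * (int n - 2)" by (intro mult_left_mono) auto
  have "- int n \<le> int u - int k" using u k by auto
  hence lo: "int p * (- int n) \<le> int p * (int u - int k)" by (intro mult_left_mono) auto
  have "int j + int p * (int u - int k) < int p * int n" using j1 up by (simp add: algebra_simps)
  moreover have "- (int p * int n) < int j + int p * (int u - int k)" using j1 lo by simp
  ultimately show ?thesis by linarith
qed

lemma good_phi:
  assumes q: "prime q" and p: "prime p" and pq: "p < q" and pn: "p * n < q ^ 2" and k: "k \<in> {1..n}"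
  shows "fgood q ((\<Sum>j\<in>{1..p-1}. (\<Sum>u<n. vq q (of_int (int j + int p * (int u - int k)))) + - int (Xk q n k))
                 + int s * (int (multiplicity q (fact n :: nat)) + - int (Xk q n k))) 1
           (Lf (Apoly p s n) {1..n} (p - 1 + s) k)"
proof -
  define X where "X = Xk q n k"
  define F where "F = multiplicity q (fact n :: nat)"
  have p0: "p > 0" using p by (simp add: prime_gt_0_nat)
  have qndvd: "\<not> q dvd p" using pq p q by (metis nat_dvd_not_less prime_gt_0_nat primes_dvd_imp_eq less_not_refl)
  have vqp: "vq q (of_nat p) = 0" using vq_nat[OF q, of p] p0 qndvd by (simp add: not_dvd_imp_multiplicity_0)
  have pnq: "int p * int n < int q ^ 2" using pn by (metis of_nat_less_iff of_nat_mult of_nat_power)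
  have Iv: "fgood q (- int X) 1 (Iv n k)"
    unfolding X_def
  proof (rule fgood_Iv[OF q k])
    fix l assume l: "l \<in> {1..n}-{k}"
    have "\<bar>int l - int k\<bar> < int p * int n"
    proof -
      have "\<bar>int l - int k\<bar> < int n" using l k by auto
      also have "\<dots> \<le> int p * int n" using p0 by (simp add: mult_le_cancel_right1)
      finally show ?thesis .
    qed
    thus "vq q (of_int (int l - int k)) \<le> 1" using l pnq by (intro vq_le1[OF q]) auto
  qed simp
  have h1: "fgood q 0 1 (fps_const (of_nat p ^ n))"
    by (rule fgood_const) (use vge_nat[OF q, of "p ^ n"] in simp_all)
  have h3: "fgood q ((\<Sum>u<n. vq q (of_int (int j + int p * (int u - int k)))) + - int X) 1 (Nj p n k j * Iv n k)"
    if j: "j \<in> {1..p-1}" for j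
  proof (rule fgood_mult[OF q _ Iv])
    show "fgood q (\<Sum>u<n. vq q (of_int (int j + int p * (int u - int k)))) 1 (Nj p n k j)"
      unfolding Nj_def
    proof (rule fgood_prod[OF q], simp, simp)
      fix u assume u: "u \<in> {..<n}"
      define a where "a = int j + int p * (int u - int k)"
      have a0: "a \<noteq> 0" unfolding a_def by (rule AP_nz[OF p j])
      have "\<bar>a\<bar> < int p * int n" unfolding a_def using j u k by (intro aj_bound) auto
      hence va: "vq q (of_int a) \<le> 1" using pnq a0 by (intro vq_le1[OF q]) auto
      show "fgood q (vq q (of_int a)) 1 (lin (of_int a) (of_nat p))"
        unfolding lin_def
      proof (rule fgood_lin)
        show "vge q (of_int a) (vq q (of_int a))" by (simp add: vge_def)
        show "vge q (of_nat p) (vq q (of_int a) - 1)" using va vqp by (simp add: vge_def)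
      qed simp
    qed
  qed
  have h4: "fgood q (int F + - int X) 1 (fps_const (fact n) * Iv n k)"
  proof -
    have "vq q (fact n) = int F" using vq_nat[OF q, of "fact n"] by (simp add: F_def)
    hence "fgood q (int F) 1 (fps_const (fact n))" using fgood_constv[OF q, of 1 "fact n"] by simp
    thus ?thesis by (rule fgood_mult[OF q _ Iv])
  qed
  have "fgood q (0 + 0 + (\<Sum>j\<in>{1..p-1}. (\<Sum>u<n. vq q (of_int (int j + int p * (int u - int k)))) + - int X) + int s * (int F + - int X)) 1
      (Lf (Apoly p s n) {1..n} (p - 1 + s) k)"
    by (rule fgood_Lf'[OF q _ p0 h1 fgood_T[OF q] h3 h4]) simp_all
  thus ?thesis by (simp add: X_def F_def)
qed

lemma F_small:
  assumes q: "prime q" and nq: "n < q * q"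
  shows "multiplicity q (fact n :: nat) = n div q"
proof -
  have "n div q < q" using nq q by (simp add: div_less_iff_less_mult prime_gt_0_nat)
  hence "multiplicity q (fact (n div q) :: nat) = 0" by (rule mult_fact_small[OF q])
  thus ?thesis using mult_fact_rec[OF q, of n] by simp
qed

lemma V_bound:
  assumes q: "prime q" and p: "prime p" and pq: "p < q" and pn: "p * n < q ^ 2" and k: "k \<in> {1..n}"
  shows "int ((p * (n mod q)) div q) - 1 \<le>
    (\<Sum>j\<in>{1..p-1}. (\<Sum>u<n. vq q (of_int (int j + int p * (int u - int k)))) + - int (Xk q n k))
                 + int s * (int (multiplicity q (fact n :: nat)) + - int (Xk q n k))"
proof -
  define X where "X = Xk q n k"
  define F where "F = multiplicity q (fact n :: nat)"
  define Q where "Q = int q"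
  have Q0: "Q > 0" using q by (simp add: Q_def prime_gt_0_nat)
  have p0: "p > 0" using p by (simp add: prime_gt_0_nat)
  have qndvd: "\<not> q dvd p" using pq p q by (metis nat_dvd_not_less prime_gt_0_nat primes_dvd_imp_eq less_not_refl)
  have nq: "n < q * q"
  proof -
    have "n \<le> p * n" using p0 by simp
    moreover have "p * n < q * q" using pn by (simp add: power2_eq_square)
    ultimately show ?thesis by linarith
  qed
  have FN: "int F = int n div Q" unfolding F_def Q_def using F_small[OF q nq] by (simp add: zdiv_int)
  have XF: "X \<le> F"
  proof -
    have "X \<le> multiplicity q (fact (n - 1) :: nat)"
      unfolding X_def Xk_def by (rule dvd_imp_multiplicity_le[OF fact_split_dvd[OF k]]) simp
    also have "\<dots> \<le> F"
      unfolding F_def by (rule dvd_imp_multiplicity_le) (simp_all add: fact_dvd)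
    finally show ?thesis .
  qed
  have a: "(\<Sum>u<n. (if Q dvd int j + int p * (int u - int k) then 1 else 0)) \<le> (\<Sum>u<n. vq q (of_int (int j + int p * (int u - int k))))"
    if j: "j \<in> {1..p-1}" for j
  proof (rule sum_mono)
    fix u
    define z where "z = int j + int p * (int u - int k)"
    have z0: "z \<noteq> 0" unfolding z_def by (rule AP_nz[OF p j])
    show "(if Q dvd int j + int p * (int u - int k) then 1 else 0) \<le> vq q (of_int (int j + int p * (int u - int k)))"
      using vq_ge1[OF q z0] vq_int[OF q z0] unfolding z_def[symmetric] Q_def by auto
  qed
  have b: "(\<Sum>j\<in>{1..p-1}. \<Sum>u<n. (if Q dvd int j + int p * (int u - int k) then 1 else 0 :: int))
        = Gq p q (int n - int k) - Gq p q (- int k)"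
  proof -
    have "(\<Sum>j\<in>{1..p-1}. \<Sum>u<n. (if Q dvd int j + int p * (int u - int k) then 1 else 0 :: int))
        = (\<Sum>u<n. \<Sum>j\<in>{1..p-1}. (if int q dvd int p * (int u - int k) + int j then 1 else 0 :: int))"
      by (subst sum.swap) (simp add: Q_def add.commute)
    also have "\<dots> = (\<Sum>u<n. Gq p q (int u - int k + 1) - Gq p q (int u - int k))"
      using count_block[OF q qndvd] p0 by simp
    also have "\<dots> = Gq p q (int n - int k) - Gq p q (- int k)" by (rule telescope_G)
    finally show ?thesis .
  qed
  have c: "(int p * int n) div Q - int n div Q - 1 \<le> Gq p q (int n - int k) - Gq p q (- int k)"
  proof -
    have d1: "(int p * int n) div Q + (int p * (- int k)) div Q \<le> (int p * (int n - int k)) div Q"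
      using div_sum_ge[OF Q0, of "int p * int n" "int p * (- int k)"] by (simp add: algebra_simps)
    have d2: "(int n - int k) div Q \<le> int n div Q + (- int k) div Q + 1"
      using div_sum_le[OF Q0, of "int n" "- int k"] by simp
    show ?thesis unfolding Gq_def Q_def[symmetric] using d1 d2 by linarith
  qed
  have d: "(int p * int n) div Q = int p * (int n div Q) + int ((p * (n mod q)) div q)"
  proof -
    have "int p * int n = int p * (int n mod Q) + (int p * (int n div Q)) * Q"
      by (metis mult.assoc mult.commute distrib_left mod_div_mult_eq add.commute)
    hence "(int p * int n) div Q = int p * (int n div Q) + (int p * (int n mod Q)) div Q"
      using Q0 by (metis div_mult_self1 add.commute less_irrefl)
    moreover have "(int p * (int n mod Q)) div Q = int ((p * (n mod q)) div q)"
      by (simp add: Q_def zdiv_int zmod_int)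
    ultimately show ?thesis by simp
  qed
  have sumX: "(\<Sum>j\<in>{1..p-1}. (\<Sum>u<n. vq q (of_int (int j + int p * (int u - int k)))) + - int X)
      = (\<Sum>j\<in>{1..p-1}. \<Sum>u<n. vq q (of_int (int j + int p * (int u - int k)))) - int (p - 1) * int X"
    by (simp add: sum_subtractf)
  have e: "(\<Sum>j\<in>{1..p-1}. \<Sum>u<n. (if Q dvd int j + int p * (int u - int k) then 1 else 0 :: int))
      \<le> (\<Sum>j\<in>{1..p-1}. \<Sum>u<n. vq q (of_int (int j + int p * (int u - int k))))"
  proof (rule sum_mono)
    fix j assume "j \<in> {1..p-1}"
    thus "(\<Sum>u<n. (if Q dvd int j + int p * (int u - int k) then 1 else 0 :: int))
      \<le> (\<Sum>u<n. vq q (of_int (int j + int p * (int u - int k))))" by (rule a)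
  qed
  have pm1: "int (p - 1) = int p - 1" using p0 by simp
  have f: "int (p - 1) * int X \<le> int (p - 1) * int F" using XF by (intro mult_left_mono) auto
  have g: "0 \<le> int s * (int F + - int X)" using XF by simp
  have h: "int p * int F - int F = int (p - 1) * int F" using pm1 by (simp add: algebra_simps)
  have pF: "int p * (int n div Q) = int p * int F" using FN by simp
  have fin: "int ((p * (n mod q)) div q) - 1 \<le> (\<Sum>j\<in>{1..p-1}. \<Sum>u<n. vq q (of_int (int j + int p * (int u - int k))))
       - int (p - 1) * int X + int s * (int F + - int X)"
    using b c d e f g h FN pF by linarith
  show ?thesis using fin sumX unfolding X_def F_def by linarith
qed

definition Qset :: "nat \<Rightarrow> nat \<Rightarrow> nat set" where
  "Qset p n = {q. prime q \<and> sqrt (real (p * n)) < real q \<and> q \<le> n}"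

lemma Phi_alt: "Phi p n = (\<Prod>q\<in>Qset p n. q ^ phi_p p (real n / real q))"
  by (simp add: Phi_def Qset_def)

lemma finite_Qset: "finite (Qset p n)"
  by (rule finite_subset[of _ "{..n}"]) (auto simp: Qset_def)

lemma Phi_nz: "Phi p n \<noteq> 0"
proof -
  have "0 < (\<Prod>q\<in>Qset p n. q ^ phi_p p (real n / real q))"
    by (rule prod_pos) (auto simp: Qset_def dest: prime_gt_0_nat)
  thus ?thesis unfolding Phi_alt by simp
qed

lemma vq_Phi:
  assumes q: "prime q"
  shows "vq q (of_nat (Phi p n)) = (if q \<in> Qset p n then int (phi_p p (real n / real q)) else 0)"
proof -
  have "multiplicity q (Phi p n) = (if q \<in> Qset p n then phi_p p (real n / real q) else 0)"
    unfolding Phi_alt by (rule multiplicity_prod_prime_powers[OF finite_Qset _ q]) (auto simp: Qset_def)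
  thus ?thesis using vq_nat[OF q Phi_nz] by simp
qed

lemma frac_nat_div: "q > 0 \<Longrightarrow> frac (real n / real q) = real (n mod q) / real q"
proof -
  assume q: "q > 0"
  have "n = n div q * q + n mod q" by simp
  hence "real n = real (n div q * q + n mod q)" by (simp only:)
  hence rn: "real n = real (n div q) * real q + real (n mod q)" by (simp only: of_nat_add of_nat_mult)
  have "real n / real q = real (n div q) + real (n mod q) / real q"
    unfolding rn using q by (simp add: add_divide_distrib)
  hence "real n / real q - real (n mod q) / real q \<in> \<int>" by simp
  moreover have "real (n mod q) / real q < 1" using q by simp
  moreover have "0 \<le> real (n mod q) / real q" by simp
  ultimately show ?thesis using frac_unique_iff by blast
qed

lemma phi_val:
  assumes q: "q > 0" and nz: "phi_p p (real n / real q) \<noteq> 0"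
  shows "int (phi_p p (real n / real q)) \<le> int ((p * (n mod q)) div q) - 1"
proof -
  have fr: "frac (real n / real q) = real (n mod q) / real q" by (rule frac_nat_div[OF q])
  have "real p * frac (real n / real q) = real (p * (n mod q)) / real q" unfolding fr by simp
  hence fl: "\<lfloor>real p * frac (real n / real q)\<rfloor> = int ((p * (n mod q)) div q)"
    by (simp only: floor_divide_of_nat_eq)
  have "phi_p p (real n / real q) = nat \<lfloor>real p * frac (real n / real q)\<rfloor> - 1"
    using nz by (auto simp: phi_p_def split: if_splits)
  hence "phi_p p (real n / real q) = (p * (n mod q)) div q - 1" unfolding fl by simp
  thus ?thesis using nz by auto
qed

lemma ee_pos: "prime q \<Longrightarrow> q \<le> n \<Longrightarrow> 1 \<le> ee q n"
proof -
  assume q: "prime q" and qn: "q \<le> n"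
  have "q dvd dlcm n" using qn q by (intro dvd_dlcm) (auto simp: prime_gt_0_nat Suc_le_eq)
  hence "1 \<le> multiplicity q (dlcm n)"
    using q dlcm_nz by (intro multiplicity_geI) (auto simp: prime_elem_def)
  thus ?thesis by (simp add: ee_def)
qed

lemma term_vge:
  assumes q: "prime q" and p: "prime p" and p5: "p \<ge> 5" and s: "s > 0" and n: "n > (p + s) ^ 4"
    and k: "k \<in> {1..n}"
  shows "vge q (of_nat (dlcm n) ^ m * (Lf (Apoly p s n) {1..n} (p - 1 + s) k $ m) / of_nat (Phi p n)) 0"
proof -
  define c where "c = Lf (Apoly p s n) {1..n} (p - 1 + s) k $ m"
  define D where "D = (of_nat (dlcm n) :: rat)"
  define P where "P = (of_nat (Phi p n) :: rat)"
  have D0: "D \<noteq> 0" by (simp add: D_def dlcm_nz)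
  have P0: "P \<noteq> 0" by (simp add: P_def Phi_nz)
  have vD: "vq q D = ee q n" unfolding D_def by (rule vq_dlcm[OF q])
  have vDm: "vge q (D ^ m) (int m * ee q n)" using vq_power[OF q D0, of m] vD by (simp add: vge_def)
  have vP: "vge q (inverse P) (- vq q P)" by (simp add: vge_def vq_inverse[OF q])
  have split: "D ^ m * c / P = (D ^ m * c) * inverse P" by (simp add: divide_inverse)
  have np: "p \<le> n"
  proof -
    have "(p + s) ^ 1 \<le> (p + s) ^ 4" by (rule power_increasing) (use s in auto)
    hence "p \<le> (p + s) ^ 4" by simp
    thus ?thesis using n by linarith
  qed
  have easy: "vge q (D ^ m * c / P) 0" if g: "fgood q 0 (ee q n) (Lf (Apoly p s n) {1..n} (p - 1 + s) k)"
      and vP0: "vq q P = 0"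
  proof -
    have "vge q c (0 - int m * ee q n)" using fgoodD[OF g] by (simp add: c_def)
    hence "vge q (D ^ m * c) (int m * ee q n + (0 - int m * ee q n))" by (rule vge_mult[OF q vDm])
    hence "vge q (D ^ m * c * inverse P) (int m * ee q n + (0 - int m * ee q n) + - vq q P)"
      by (rule vge_mult[OF q _ vP])
    thus ?thesis unfolding split using vP0 by simp
  qed
  have pQ: "p \<notin> Qset p n"
  proof
    assume "p \<in> Qset p n"
    hence "sqrt (real (p * n)) < real p" by (simp add: Qset_def)
    moreover have "real p \<le> sqrt (real (p * n))"
    proof (rule real_le_rsqrt)
      have "p * p \<le> p * n" using np by simp
      thus "(real p)\<^sup>2 \<le> real (p * n)" by (simp add: power2_eq_square flip: of_nat_mult)
    qed
    ultimately show False by simp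
  qed
  show ?thesis
  proof (cases "q = p")
    case True
    have "vq q P = 0" unfolding P_def vq_Phi[OF q] using pQ True by simp
    thus ?thesis using easy good_p[OF p k, of s] True by (simp add: D_def P_def c_def)
  next
    case False
    note qp = this
    show ?thesis
    proof (cases "q \<in> Qset p n \<and> phi_p p (real n / real q) \<noteq> 0")
      case False
      hence "vq q P = 0" unfolding P_def vq_Phi[OF q] by auto
      thus ?thesis using easy good_q[OF q p qp k, of s] by (simp add: D_def P_def c_def)
    next
      case True
      define ph where "ph = phi_p p (real n / real q)"
      have qQ: "q \<in> Qset p n" and ph0: "ph \<noteq> 0" using True by (auto simp: ph_def)
      have qn: "q \<le> n" and sq: "sqrt (real (p * n)) < real q" using qQ by (auto simp: Qset_def)
      have pnq: "p * n < q ^ 2"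
      proof -
        have "(sqrt (real (p * n)))\<^sup>2 < (real q)\<^sup>2"
          by (rule power_strict_mono[OF sq]) auto
        hence "real (p * n) < (real q)\<^sup>2" by simp
        hence "real (p * n) < real (q ^ 2)" by simp
        thus ?thesis by (simp only: of_nat_less_iff)
      qed
      have pq: "p < q"
      proof -
        have "real p \<le> sqrt (real (p * n))"
        proof (rule real_le_rsqrt)
          have "p * p \<le> p * n" using np by simp
          thus "(real p)\<^sup>2 \<le> real (p * n)" by (simp add: power2_eq_square flip: of_nat_mult)
        qed
        thus ?thesis using sq by linarith
      qed
      have q0: "q > 0" using q by (simp add: prime_gt_0_nat)
      have vP1: "vq q P = int ph" unfolding P_def vq_Phi[OF q] using qQ by (simp add: ph_def)
      have g: "fgood q (int ph) 1 (Lf (Apoly p s n) {1..n} (p - 1 + s) k)"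
      proof -
        have a: "int ph \<le> int ((p * (n mod q)) div q) - 1" unfolding ph_def by (rule phi_val[OF q0 ph0[unfolded ph_def]])
        show ?thesis
          by (rule fgood_mono[OF good_phi[OF q p pq pnq k, of s] _ order_refl])
             (use a V_bound[OF q p pq pnq k, of s] in linarith)
      qed
      have e1: "1 \<le> ee q n" by (rule ee_pos[OF q qn])
      have "vge q c (int ph - int m * 1)" using fgoodD[OF g] by (simp add: c_def)
      hence "vge q (D ^ m * c) (int m * ee q n + (int ph - int m * 1))" by (rule vge_mult[OF q vDm])
      hence "vge q (D ^ m * c * inverse P) (int m * ee q n + (int ph - int m * 1) + - vq q P)"
        by (rule vge_mult[OF q _ vP])
      moreover have "0 \<le> int m * ee q n + (int ph - int m * 1) + - vq q P"
      proof -
        have "int m * 1 \<le> int m * ee q n" using e1 by (intro mult_left_mono) auto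
        thus ?thesis using vP1 by simp
      qed
      ultimately have "vge q (D ^ m * c / P) 0" unfolding split by (rule vge_mono)
      thus ?thesis by (simp add: D_def c_def P_def)
    qed
  qed
qed

theorem lemma5p5:
  fixes p s n i :: nat
  assumes "prime p" and "p \<ge> 5" and "s > 0"
    and "n > (p + s) ^ 4"
    and "i \<in> {2..p - 1 + s}"
  shows "of_nat (dlcm n) ^ (p - 1 + s - i) * rho p s n i / of_nat (Phi p n) \<in> (\<int> :: rat set)"
proof -
  note p = assms(1) and p5 = assms(2) and s = assms(3) and n = assms(4)
  define m where "m = p - 1 + s - i"
  have i1: "i \<in> {1..p - 1 + s}" using assms(5) by auto
  have rho_eq: "rho p s n i = (\<Sum>k=1..n. Lf (Apoly p s n) {1..n} (p - 1 + s) k $ m)"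
    unfolding rho_def m_def by (intro sum.cong refl pf_coeff_eq[OF p p5 s n i1]) auto
  have "of_nat (dlcm n) ^ m * rho p s n i / of_nat (Phi p n)
      = (\<Sum>k=1..n. of_nat (dlcm n) ^ m * (Lf (Apoly p s n) {1..n} (p - 1 + s) k $ m) / of_nat (Phi p n))"
    unfolding rho_eq by (simp add: sum_distrib_left sum_divide_distrib)
  also have "\<dots> \<in> \<int>"
  proof (rule Ints_sum)
    fix k assume k: "k \<in> {1..n}"
    show "of_nat (dlcm n) ^ m * (Lf (Apoly p s n) {1..n} (p - 1 + s) k $ m) / of_nat (Phi p n) \<in> (\<int> :: rat set)"
      by (rule int_criterion) (rule term_vge[OF _ p p5 s n k])
  qed
  finally show ?thesis unfolding m_def .
qed

end
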